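(* Let $k,l\geq1$ and let $P$ be a semisimple conjugacy class of $k\times k$ complex matrices with distinct eigenvalues $\zeta_1,\dots,\zeta_r$ of multiplicities $k_1,\dots,k_r$. Let $\mathcal{M}(k,l)^{0}$ denote the set of quadruples $(X,Y,F,G)\in\mathcal{M}(k,l)$ at which the action of $GL_k(\mathbb{C})$, $g.(X,Y,F,G)=(gXg^{-1},Y,gF,Gg^{-1})$, is free and proper. Then the map $(X,Y,F,G)\mapsto R(\zeta)=Y+G(\zeta-X)^{-1}F$ induces a bijection between the $GL_k(\mathbb{C})$-orbits on $\{(X,Y,F,G)\in\mathcal{M}(k,l)^0;\ X\in P\}$ and the set $\mathcal{R}_l(P)$ of all $\mathrm{Mat}_{l,l}(\mathbb{C})$-valued rational maps of the form $$R(\zeta)=Y+\sum_{i=1}^r\frac{R_i}{\zeta-\zeta_i},\qquad Y,R_i\in\mathrm{Mat}_{l,l}(\mathbb{C}),\ \operatorname{rank}R_i=k_i.$$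
   Context: $\mathcal{M}(k,l)$ is the space of quadruples $(X,Y,F,G)$ with $X\in\mathrm{Mat}_{k,k}(\mathbb{C})$, $Y\in\mathrm{Mat}_{l,l}(\mathbb{C})$, $F\in\mathrm{Mat}_{k,l}(\mathbb{C})$, $G\in\mathrm{Mat}_{l,k}(\mathbb{C})$. *)

theory Defs
  imports "HOL-Analysis.Analysis"
begin

text \<open>Quadruples (X,Y,F,G) in M(k,l): X is k x k, Y is l x l, F is k x l, G is l x k.
  The sizes k, l are the cardinalities of the finite index types 'k, 'l
  (so k, l >= 1 automatically).\<close>

type_synonym ('k, 'l) quad =
  "(complex^'k^'k) \<times> (complex^'l^'l) \<times> (complex^'l^'k) \<times> (complex^'k^'l)"

text \<open>The GL_k action g.(X,Y,F,G) = (g X g^-1, Y, g F, G g^-1).\<close>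
definition gl_act :: "complex^'k^'k \<Rightarrow> ('k::finite, 'l::finite) quad \<Rightarrow> ('k, 'l) quad" where
  "gl_act g q = (case q of (X, Y, F, G) \<Rightarrow>
     (g ** X ** matrix_inv g, Y, g ** F, G ** matrix_inv g))"

definition gl_orbit :: "('k::finite, 'l::finite) quad \<Rightarrow> ('k, 'l) quad set" where
  "gl_orbit q = {gl_act g q | g. invertible g}"

text \<open>M(k,l)^0: points where the action is free (trivial stabiliser) and proper
  (closed orbit), i.e. the GIT-stable points with trivial stabiliser.\<close>
definition M0 :: "('k::finite, 'l::finite) quad set" where
  "M0 = {q. (\<forall>g. invertible g \<and> gl_act g q = q \<longrightarrow> g = mat 1) \<and> closed (gl_orbit q)}"

definition diagonalizable :: "complex^'n^'n \<Rightarrow> bool" where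
  "diagonalizable X \<longleftrightarrow> (\<exists>S::complex^'n^'n. invertible S \<and>
      (\<forall>i j. i \<noteq> j \<longrightarrow> (S ** X ** matrix_inv S) $ i $ j = 0))"

definition eigenspace :: "complex^'n^'n \<Rightarrow> complex \<Rightarrow> (complex^'n) set" where
  "eigenspace X c = {v. X *v v = c *s v}"

definition eigenvalues :: "complex^'n^'n \<Rightarrow> complex set" where
  "eigenvalues X = {c. \<exists>v. v \<noteq> 0 \<and> X *v v = c *s v}"

text \<open>P is the conjugacy class of a semisimple matrix whose distinct eigenvalues are
  zeta 0, ..., zeta (r-1), with multiplicities kk 0, ..., kk (r-1).\<close>
definition semisimple_class ::
  "(complex^'n^'n) set \<Rightarrow> nat \<Rightarrow> (nat \<Rightarrow> complex) \<Rightarrow> (nat \<Rightarrow> nat) \<Rightarrow> bool" where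
  "semisimple_class P r zeta kk \<longleftrightarrow> (\<exists>X0. diagonalizable X0 \<and>
      P = {g ** X0 ** matrix_inv g | g :: complex^'n^'n. invertible g} \<and>
      inj_on zeta {..<r} \<and> eigenvalues X0 = zeta ` {..<r} \<and>
      (\<forall>i<r. vec.dim (eigenspace X0 (zeta i)) = kk i))"

text \<open>Rational matrix-valued maps are represented as functions on C, set to 0 at the
  (finitely many) poles zeta ` {..<r}; two rational maps agree iff they agree off
  this finite set.\<close>
definition transfer_map ::
  "nat \<Rightarrow> (nat \<Rightarrow> complex) \<Rightarrow> ('k::finite, 'l::finite) quad \<Rightarrow> complex \<Rightarrow> complex^'l^'l" where
  "transfer_map r zeta q = (case q of (X, Y, F, G) \<Rightarrow>
     (\<lambda>z. if z \<in> zeta ` {..<r} then 0 else Y + G ** matrix_inv (mat z - X) ** F))"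

definition rat_maps_R ::
  "nat \<Rightarrow> (nat \<Rightarrow> complex) \<Rightarrow> (nat \<Rightarrow> nat) \<Rightarrow> (complex \<Rightarrow> complex^'l::finite^'l) set" where
  "rat_maps_R r zeta kk =
     {(\<lambda>z. if z \<in> zeta ` {..<r} then 0
           else Y + (\<Sum>i<r. mat (inverse (z - zeta i)) ** Rs i)) | Y Rs.
        \<forall>i<r. rank (Rs i) = kk i}"

end

theory Submission
  imports Defs
begin

(* ---- A1 ---- *)
lemma mat_mult_left: "mat c ** (A::'a::semiring_1^'n^'m) = (\<chi> i j. c * A$i$j)"
  unfolding matrix_matrix_mult_def mat_def
  by (auto simp: vec_eq_iff if_distrib if_distribR sum.delta'[OF finite] cong: if_cong)

lemma mat_mult_right: "(A::'a::semiring_1^'n^'m) ** mat c = (\<chi> i j. A$i$j * c)"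
  unfolding matrix_matrix_mult_def mat_def
  by (auto simp: vec_eq_iff if_distrib if_distribR sum.delta'[OF finite] cong: if_cong)

lemma mat_comm: "mat c ** (A::'a::comm_semiring_1^'n^'n) = A ** mat c"
  by (simp add: mat_mult_left mat_mult_right mult.commute)

lemma mat_comm2: "A ** (mat c ** B) = mat c ** (A ** (B::'a::comm_semiring_1^'p^'n))"
  unfolding mat_mult_left by (simp add: matrix_matrix_mult_def vec_eq_iff sum_distrib_left mult_ac)

lemma mat_mat: "mat a ** mat b = (mat (a*b) :: 'a::semiring_1^'n^'n)"
  unfolding mat_mult_left by (simp add: vec_eq_iff mat_def)

lemma mat_add: "mat a + mat b = (mat (a+b) :: 'a::semiring_1^'n^'n)"
  by (simp add: vec_eq_iff mat_def)

lemma mat_diff: "mat a - mat b = (mat (a-b) :: 'a::ring_1^'n^'n)"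
  by (simp add: vec_eq_iff mat_def)

lemma mat_sum: "sum (\<lambda>i. mat (f i)) I = (mat (sum f I) :: 'a::semiring_1^'n^'n)"
  by (induction I rule: infinite_finite_induct) (auto simp: mat_add)

lemma matrix_add_rdistrib: "(A + B) ** C = (A ** C) + (B ** (C::'a::semiring_1^'p^'n))"
  by (vector matrix_matrix_mult_def sum.distrib[symmetric] field_simps)

lemma matrix_diff_ldistrib: "A ** (B - C) = (A ** B) - (A ** (C::'a::ring_1^'p^'n))"
  by (vector matrix_matrix_mult_def sum_subtractf[symmetric] algebra_simps)

lemma matrix_diff_rdistrib: "(A - B) ** C = (A ** C) - (B ** (C::'a::ring_1^'p^'n))"
  by (vector matrix_matrix_mult_def sum_subtractf[symmetric] algebra_simps)

lemma matrix_sum_ldistrib: "A ** sum B I = sum (\<lambda>i. A ** B i) (I::'i set)"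
  by (induction I rule: infinite_finite_induct) (auto simp: matrix_add_ldistrib)

lemma matrix_sum_rdistrib: "sum B I ** A = sum (\<lambda>i. B i ** A) (I::'i set)"
  by (induction I rule: infinite_finite_induct) (auto simp: matrix_add_rdistrib)

lemma mat_one_entry: "mat c $ i $ j = (if i = j then c else 0)"
  by (simp add: mat_def)

lemma minv_unique:
  fixes A B :: "'a::field^'n^'n"
  assumes "A ** B = mat 1"
  shows "invertible A" "matrix_inv A = B"
proof -
  have BA: "B ** A = mat 1" using assms matrix_left_right_inverse by blast
  show "invertible A" using assms BA invertible_def by blast
  have ex: "\<exists>A'. A ** A' = mat 1 \<and> A' ** A = mat 1" using assms BA by blast
  have "A ** matrix_inv A = mat 1 \<and> matrix_inv A ** A = mat 1"
    unfolding matrix_inv_def by (rule someI_ex[OF ex])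
  then have "matrix_inv A = matrix_inv A ** (A ** B)" using assms by simp
  also have "\<dots> = B" by (simp add: matrix_mul_assoc \<open>_ \<and> _\<close>)
  finally show "matrix_inv A = B" .
qed

lemma minv_r: "invertible (A::'a::field^'n^'n) \<Longrightarrow> A ** matrix_inv A = mat 1"
  unfolding invertible_def matrix_inv_def by (rule conjunct1[OF someI_ex]) blast

lemma minv_l: "invertible (A::'a::field^'n^'n) \<Longrightarrow> matrix_inv A ** A = mat 1"
  unfolding invertible_def matrix_inv_def by (rule conjunct2[OF someI_ex]) blast

lemma minv_inv: "invertible (A::'a::field^'n^'n) \<Longrightarrow> invertible (matrix_inv A) \<and> matrix_inv (matrix_inv A) = A"
  using minv_unique[OF minv_l] by blast

lemma minv_mult: assumes a: "invertible (A::'a::field^'n^'n)" "invertible (B::'a^'n^'n)" shows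
   "matrix_inv (A ** B) = matrix_inv B ** matrix_inv A"
proof (rule minv_unique(2))
  have "A ** B ** (matrix_inv B ** matrix_inv A) = A ** (B ** matrix_inv B) ** matrix_inv A"
    by (simp add: matrix_mul_assoc)
  then show "A ** B ** (matrix_inv B ** matrix_inv A) = mat 1" using a by (simp add: minv_r)
qed

lemma minv_one: "matrix_inv (mat 1 :: 'a::field^'n^'n) = mat 1" "invertible (mat 1 :: 'a::field^'n^'n)"
  using minv_unique[of "mat 1" "mat 1"] by auto

(* ---- A2 ---- *)
lemma column_mv: "column i (A::'a::comm_semiring_1^'n^'m) = A *v axis i 1"
  by (simp add: column_def matrix_vector_mult_def axis_def vec_eq_iff if_distrib if_distribR cong: if_cong)

lemma columns_sub_range: "columns (A::'a::field^'n^'m) \<subseteq> range ((*v) A)"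
  unfolding columns_def by (auto simp: column_mv)

lemma range_sub_span_rows_dim:
  fixes A :: "'a::field^'n^'m"
  shows "vec.dim (range ((*v) A)) \<le> vec.dim (rows A)"
proof -
  obtain B where B: "B \<subseteq> rows A" "vec.independent B" "rows A \<subseteq> vec.span B" "card B = vec.dim (rows A)"
    using vec.basis_exists[of "rows A"] by blast
  have fB: "finite B" using B(2) vec.finiteI_independent by blast
  have "\<forall>i. \<exists>u. row i A = (\<Sum>b\<in>B. u b *s b)"
  proof
    fix i
    have "row i A \<in> vec.span B" using B(3) unfolding rows_def by blast
    then show "\<exists>u. row i A = (\<Sum>b\<in>B. u b *s b)"
      using vec.span_finite[OF fB] by auto
  qed
  then obtain u where u: "\<And>i. row i A = (\<Sum>b\<in>B. u i b *s b)" by metis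
  define c where "c b = (\<chi> i. u i b)" for b
  have "range ((*v) A) \<subseteq> vec.span (c ` B)"
  proof
    fix y assume "y \<in> range ((*v) A)"
    then obtain x where y: "y = A *v x" by blast
    have "A *v x = (\<Sum>b\<in>B. (\<Sum>j\<in>UNIV. b$j * x$j) *s c b)"
    proof (subst vec_eq_iff, intro allI)
      fix i
      have "A $ i = row i A" by (simp add: row_def vec_eq_iff)
      then have "(A *v x) $ i = (\<Sum>j\<in>UNIV. (\<Sum>b\<in>B. u i b * b $ j) * x $ j)"
        by (simp add: matrix_vector_mult_def u)
      also have "\<dots> = (\<Sum>b\<in>B. (\<Sum>j\<in>UNIV. b$j * x$j) * u i b)"
        by (simp add: sum_distrib_left sum_distrib_right mult_ac sum.swap[of _ B])
      finally show "(A *v x) $ i = (\<Sum>b\<in>B. (\<Sum>j\<in>UNIV. b$j * x$j) *s c b) $ i"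
        by (simp add: c_def)
    qed
    then show "y \<in> vec.span (c ` B)"
      using y by (auto intro!: vec.span_sum vec.span_scale intro: vec.span_base)
  qed
  then have "vec.dim (range ((*v) A)) \<le> card (c ` B)"
    using vec.dim_le_card fB by blast
  also have "\<dots> \<le> card B" using fB card_image_le by blast
  finally show ?thesis using B(4) by simp
qed

lemma rank_eq_dim_range:
  fixes A :: "'a::field^'n^'m"
  shows "rank A = vec.dim (range ((*v) A))"
proof -
  have 1: "vec.dim (range ((*v) A)) \<le> vec.dim (rows A)" by (rule range_sub_span_rows_dim)
  have "vec.dim (rows A) = vec.dim (columns (transpose A))" by simp
  also have "\<dots> \<le> vec.dim (range ((*v) (transpose A)))"
    by (rule vec.dim_subset[OF columns_sub_range])
  also have "\<dots> \<le> vec.dim (rows (transpose A))" by (rule range_sub_span_rows_dim)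
  also have "\<dots> = vec.dim (columns A)" by simp
  also have "\<dots> \<le> vec.dim (range ((*v) A))" by (rule vec.dim_subset[OF columns_sub_range])
  finally show ?thesis using 1 unfolding row_rank_def_gen by simp
qed

lemma rank_transpose_gen:
  fixes A :: "'a::field^'n^'m"
  shows "rank (transpose A) = rank A"
proof -
  have 1: "vec.dim (range ((*v) A)) \<le> vec.dim (rows A)" by (rule range_sub_span_rows_dim)
  have "vec.dim (rows A) = vec.dim (columns (transpose A))" by simp
  also have "\<dots> \<le> vec.dim (range ((*v) (transpose A)))"
    by (rule vec.dim_subset[OF columns_sub_range])
  also have "\<dots> \<le> vec.dim (rows (transpose A))" by (rule range_sub_span_rows_dim)
  also have "\<dots> = vec.dim (columns A)" by simp
  also have "\<dots> \<le> vec.dim (range ((*v) A))" by (rule vec.dim_subset[OF columns_sub_range])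
  finally have 2: "vec.dim (rows A) \<le> vec.dim (rows (transpose A))" 
    using \<open>vec.dim (range ((*v) (transpose A))) \<le> vec.dim (rows (transpose A))\<close>
      \<open>vec.dim (columns (transpose A)) \<le> vec.dim (range ((*v) (transpose A)))\<close> by simp
  have 3: "vec.dim (rows (transpose A)) \<le> vec.dim (rows A)"
    using rank_eq_dim_range[of "transpose A"] rank_eq_dim_range[of A] 1
      vec.dim_subset[OF columns_sub_range, of A]
    unfolding row_rank_def_gen by simp
  show ?thesis using 2 3 unfolding row_rank_def_gen by simp
qed

(* ---- A3 ---- *)
definition spec :: "complex^'k^'k \<Rightarrow> nat \<Rightarrow> (nat \<Rightarrow> complex) \<Rightarrow> (nat \<Rightarrow> nat) \<Rightarrow> (nat \<Rightarrow> complex^'k^'k) \<Rightarrow> bool" where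
 "spec X r zeta kk Pr \<longleftrightarrow> inj_on zeta {..<r} \<and> (\<Sum>i<r. Pr i) = mat 1 \<and>
    (\<forall>i<r. \<forall>j<r. Pr i ** Pr j = (if i = j then Pr i else 0)) \<and>
    (\<forall>i<r. X ** Pr i = mat (zeta i) ** Pr i \<and> Pr i ** X = mat (zeta i) ** Pr i) \<and>
    (\<forall>i<r. vec.dim (range ((*v) (Pr i))) = kk i)"

lemma diag_form:
  fixes D :: "'a::semiring_1^'n^'n"
  assumes "\<forall>i j. i \<noteq> j \<longrightarrow> D $ i $ j = 0"
  shows "D = (\<chi> i j. if i = j then D$i$i else 0)"
  using assms by (auto simp: vec_eq_iff)

lemma sum_ifs:
  fixes x :: "'a::semiring_1" and y :: "'n::finite \<Rightarrow> 'a"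
  shows "(\<Sum>k\<in>UNIV. (if a = k \<and> P then x else 0) * (if k = b \<and> Q k then y k else 0)) = (if a = b \<and> P \<and> Q a then x * y a else 0)"
    "(\<Sum>k\<in>UNIV. (if a = k then x else 0) * (if k = b \<and> Q k then y k else 0)) = (if a = b \<and> Q a then x * y a else 0)"
    "(\<Sum>k\<in>UNIV. (if a = k \<and> P then x else 0) * (if k = b then y k else 0)) = (if a = b \<and> P then x * y a else 0)"
proof -
  have "(\<Sum>k\<in>UNIV. (if a = k \<and> P then x else 0) * (if k = b \<and> Q k then y k else 0)) = (\<Sum>k\<in>UNIV. if k = a then (if a = b \<and> P \<and> Q a then x * y a else 0) else 0)"
    by (rule sum.cong) auto
  then show "(\<Sum>k\<in>UNIV. (if a = k \<and> P then x else 0) * (if k = b \<and> Q k then y k else 0)) = (if a = b \<and> P \<and> Q a then x * y a else 0)" by simp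
  have "(\<Sum>k\<in>UNIV. (if a = k then x else 0) * (if k = b \<and> Q k then y k else 0)) = (\<Sum>k\<in>UNIV. if k = a then (if a = b \<and> Q a then x * y a else 0) else 0)"
    by (rule sum.cong) auto
  then show "(\<Sum>k\<in>UNIV. (if a = k then x else 0) * (if k = b \<and> Q k then y k else 0)) = (if a = b \<and> Q a then x * y a else 0)" by simp
  have "(\<Sum>k\<in>UNIV. (if a = k \<and> P then x else 0) * (if k = b then y k else 0)) = (\<Sum>k\<in>UNIV. if k = a then (if a = b \<and> P then x * y a else 0) else 0)"
    by (rule sum.cong) auto
  then show "(\<Sum>k\<in>UNIV. (if a = k \<and> P then x else 0) * (if k = b then y k else 0)) = (if a = b \<and> P then x * y a else 0)" by simp
qed

lemma sum_if_conj: "(\<Sum>j\<in>(UNIV::'n::finite set). if a = j \<and> P then f j else 0) = (if P then f a else (0::'a::comm_monoid_add))"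
  by (cases P) (auto simp: sum.delta)

lemma spec_conj:
  fixes d :: "'k::finite \<Rightarrow> complex" and zeta :: "nat \<Rightarrow> complex"
  defines "D \<equiv> (\<chi> i j. if i = j then d i else 0) :: complex^'k^'k"
  defines "Dl i \<equiv> (\<chi> a b. if a = b \<and> d a = zeta i then 1 else 0) :: complex^'k^'k"
  assumes inj: "inj_on zeta {..<r}"
    and ev: "\<forall>a. d a \<in> zeta ` {..<r}"
  shows "(\<Sum>i<r. Dl i) = mat 1"
    "\<forall>i<r. \<forall>j<r. Dl i ** Dl j = (if i = j then Dl i else 0)"
    "\<forall>i<r. D ** Dl i = mat (zeta i) ** Dl i \<and> Dl i ** D = mat (zeta i) ** Dl i"
    "\<forall>i. {v. D *v v = zeta i *s v} = range ((*v) (Dl i))"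
proof -
  show "(\<Sum>i<r. Dl i) = mat 1"
  proof (subst vec_eq_iff, intro allI, subst vec_eq_iff, intro allI)
    fix a b
    obtain i0 where i0: "i0 < r" "d a = zeta i0" using ev by blast
    have "(\<Sum>i<r. (if a = b \<and> d a = zeta i then 1 else 0::complex)) = (\<Sum>i<r. if i = i0 then (if a = b then 1 else 0) else 0)"
      apply (rule sum.cong, simp)
      using inj i0 by (auto simp: inj_on_def)
    also have "\<dots> = (if a = b then 1 else 0)" using i0 by simp
    finally show "(\<Sum>i<r. Dl i) $ a $ b = mat 1 $ a $ b"
      by (simp add: Dl_def mat_def)
  qed
  show "\<forall>i<r. \<forall>j<r. Dl i ** Dl j = (if i = j then Dl i else 0)"
  proof (intro allI impI)
    fix i j assume ij: "i < r" "j < r"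
    show "Dl i ** Dl j = (if i = j then Dl i else 0)"
    proof -
      have e: "(Dl i ** Dl j) $ a $ b = (if a = b \<and> d a = zeta i \<and> d a = zeta j then 1 else 0)" for a b
        unfolding Dl_def matrix_matrix_mult_def by (auto simp add: sum_ifs)
      show ?thesis
        using ij inj e by (auto simp: vec_eq_iff Dl_def inj_on_def)
    qed
  qed
  show "\<forall>i<r. D ** Dl i = mat (zeta i) ** Dl i \<and> Dl i ** D = mat (zeta i) ** Dl i"
  proof (intro allI impI conjI)
    fix i assume "i < r"
    have e1: "(D ** Dl i) $ a $ b = (if a = b \<and> d a = zeta i then zeta i else 0)" for a b
      unfolding Dl_def matrix_matrix_mult_def D_def by (auto simp add: sum_ifs)
    have e2: "(Dl i ** D) $ a $ b = (if a = b \<and> d a = zeta i then zeta i else 0)" for a b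
      unfolding Dl_def matrix_matrix_mult_def D_def by (auto simp add: sum_ifs)
    show "D ** Dl i = mat (zeta i) ** Dl i" "Dl i ** D = mat (zeta i) ** Dl i"
      unfolding mat_mult_left using e1 e2 by (auto simp: vec_eq_iff Dl_def)
  qed
  show "\<forall>i. {v. D *v v = zeta i *s v} = range ((*v) (Dl i))"
  proof (intro allI set_eqI iffI)
    fix i v assume "v \<in> {v. D *v v = zeta i *s v}"
    then have "\<forall>a. d a * v$a = zeta i * v$a"
      unfolding D_def by (auto simp: vec_eq_iff matrix_vector_mult_def if_distrib if_distribR sum.delta'[OF finite] cong: if_cong)
    then have "Dl i *v v = v"
      unfolding Dl_def by (auto simp: vec_eq_iff matrix_vector_mult_def if_distrib if_distribR sum_if_conj cong: if_cong)
    then show "v \<in> range ((*v) (Dl i))" by (metis rangeI)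
  next
    fix i v assume "v \<in> range ((*v) (Dl i))"
    then obtain w where "v = Dl i *v w" by blast
    then show "v \<in> {v. D *v v = zeta i *s v}"
      unfolding Dl_def D_def by (auto simp: vec_eq_iff matrix_vector_mult_def if_distrib if_distribR sum.delta'[OF finite] cong: if_cong)
  qed
qed

(* ---- A4 ---- *)
lemma conj_mult:
  fixes U Ui A B :: "'a::field^'n^'n"
  assumes "Ui ** U = mat 1"
  shows "(U ** A ** Ui) ** (U ** B ** Ui) = U ** (A ** B) ** Ui"
proof -
  have "(U ** A ** Ui) ** (U ** B ** Ui) = U ** A ** (Ui ** U) ** B ** Ui"
    by (simp add: matrix_mul_assoc)
  then show ?thesis using assms by (simp add: matrix_mul_assoc)
qed

lemma sum_ifs0: "(\<Sum>k\<in>(UNIV::'n::finite set). (if a = k then x else 0) * (if k = b then y else 0)) = (if a = b then x * y else (0::'a::semiring_1))"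
proof -
  have "(\<Sum>k\<in>(UNIV::'n::finite set). (if a = k then x else 0) * (if k = b then y else 0)) = (\<Sum>k\<in>(UNIV::'n::finite set). if k = a then (if a = b then x * y else 0) else 0)"
    by (rule sum.cong) auto
  then show ?thesis by simp
qed

lemma conj_mat: fixes U A Ui :: "'a::comm_ring_1^'n^'n" shows "U ** (mat c ** A) ** Ui = mat c ** (U ** A ** Ui)"
proof -
  have "U ** mat c = mat c ** U" by (rule mat_comm[symmetric])
  then show ?thesis by (simp add: matrix_mul_assoc)
qed

lemma spec_exists:
  fixes P :: "(complex^'k::finite^'k) set"
  assumes ss: "semisimple_class P r zeta kk" and XP: "X \<in> P"
  shows "\<exists>Pr. spec X r zeta kk Pr"
proof -
  obtain X0 :: "complex^'k^'k" where dX0: "diagonalizable X0"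
    and Peq: "P = {g ** X0 ** matrix_inv g | g :: complex^'k^'k. invertible g}"
    and inj: "inj_on zeta {..<r}" and evX0: "eigenvalues X0 = zeta ` {..<r}"
    and dims: "\<forall>i<r. vec.dim (eigenspace X0 (zeta i)) = kk i"
    using ss unfolding semisimple_class_def by blast
  obtain g :: "complex^'k^'k" where g: "invertible g" "X = g ** X0 ** matrix_inv g"
    using XP Peq by blast
  obtain T :: "complex^'k^'k" where T: "invertible T"
    and offd: "\<forall>i j. i \<noteq> j \<longrightarrow> (T ** X0 ** matrix_inv T) $ i $ j = 0"
    using dX0 unfolding diagonalizable_def by blast
  define D where "D = T ** X0 ** matrix_inv T"
  define d where "d a = D $ a $ a" for a
  define Ti where "Ti = matrix_inv T"
  have TTi: "T ** Ti = mat 1" "Ti ** T = mat 1" using T minv_r minv_l Ti_def by auto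
  have Dd: "D = (\<chi> i j. if i = j then d i else 0)"
    using diag_form[of D] offd unfolding D_def d_def by (simp add: D_def)
  have X0D: "X0 = Ti ** D ** T"
  proof -
    have "Ti ** D ** T = (Ti ** T) ** X0 ** (Ti ** T)"
      unfolding D_def Ti_def by (simp add: matrix_mul_assoc)
    then show ?thesis using TTi by simp
  qed
  have ev: "\<forall>a. d a \<in> zeta ` {..<r}"
  proof
    fix a
    define v where "v = Ti *v axis a 1"
    have "T *v v = axis a 1" unfolding v_def by (simp add: matrix_vector_mul_assoc TTi)
    then have v0: "v \<noteq> 0" by (auto simp: axis_eq_0_iff)
    have Dax: "D *v axis a 1 = d a *s axis a 1"
      unfolding Dd by (auto simp: vec_eq_iff matrix_vector_mult_def axis_def sum_ifs0)
    have "X0 *v v = Ti *v (D *v (T *v v))"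
      unfolding X0D by (simp add: matrix_vector_mul_assoc matrix_mul_assoc)
    also have "\<dots> = d a *s v"
      using \<open>T *v v = axis a 1\<close> Dax by (simp add: vector_scalar_commute v_def)
    finally have "d a \<in> eigenvalues X0" using v0 unfolding eigenvalues_def by blast
    then show "d a \<in> zeta ` {..<r}" using evX0 by simp
  qed
  define Dl where "Dl i = ((\<chi> a b. if a = b \<and> d a = zeta i then 1 else 0) :: complex^'k^'k)" for i
  note sc = spec_conj[OF inj ev, folded Dd, folded Dl_def]
  define U where "U = g ** Ti"
  define Ui where "Ui = T ** matrix_inv g"
  have UUi: "Ui ** U = mat 1" "U ** Ui = mat 1"
  proof -
    have "Ui ** U = T ** (matrix_inv g ** g) ** Ti" unfolding U_def Ui_def by (simp add: matrix_mul_assoc)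
    then show "Ui ** U = mat 1" using g(1) TTi by (simp add: minv_l)
    have "U ** Ui = g ** (Ti ** T) ** matrix_inv g" unfolding U_def Ui_def by (simp add: matrix_mul_assoc)
    then show "U ** Ui = mat 1" using g(1) TTi by (simp add: minv_r)
  qed
  have XU: "X = U ** D ** Ui"
    unfolding g(2) X0D U_def Ui_def by (simp add: matrix_mul_assoc)
  define Pr where "Pr i = U ** Dl i ** Ui" for i
  have s1: "(\<Sum>i<r. Pr i) = mat 1"
    unfolding Pr_def using sc(1) UUi by (simp add: matrix_sum_ldistrib[symmetric] matrix_sum_rdistrib[symmetric])
  have s2: "\<forall>i<r. \<forall>j<r. Pr i ** Pr j = (if i = j then Pr i else 0)"
    unfolding Pr_def using sc(2) conj_mult[OF UUi(1)] by simp
  have s3: "\<forall>i<r. X ** Pr i = mat (zeta i) ** Pr i \<and> Pr i ** X = mat (zeta i) ** Pr i"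
  proof (intro allI impI conjI)
    fix i assume i: "i < r"
    show "X ** Pr i = mat (zeta i) ** Pr i" "Pr i ** X = mat (zeta i) ** Pr i"
      unfolding Pr_def XU conj_mult[OF UUi(1)] using sc(3) i by (simp_all add: conj_mat)
  qed
  have s4: "\<forall>i<r. vec.dim (range ((*v) (Pr i))) = kk i"
  proof (intro allI impI)
    fix i assume "i < r"
    have r1: "range ((*v) (Pr i)) = (*v) U ` range ((*v) (Dl i))"
    proof (intro set_eqI iffI)
      fix y assume "y \<in> range ((*v) (Pr i))"
      then obtain x where "y = Pr i *v x" by blast
      then have "y = U *v (Dl i *v (Ui *v x))" unfolding Pr_def by (simp add: matrix_vector_mul_assoc matrix_mul_assoc)
      then show "y \<in> (*v) U ` range ((*v) (Dl i))" by blast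
    next
      fix y assume "y \<in> (*v) U ` range ((*v) (Dl i))"
      then obtain x where "y = U *v (Dl i *v x)" by blast
      then have "y = Pr i *v (U *v x)" unfolding Pr_def
        by (simp add: matrix_vector_mul_assoc matrix_mul_assoc[symmetric] UUi)
      then show "y \<in> range ((*v) (Pr i))" by blast
    qed
    have r2: "eigenspace X0 c = (*v) Ti ` {v. D *v v = c *s v}" for c
    proof (intro set_eqI iffI)
      fix x assume "x \<in> eigenspace X0 c"
      then have "X0 *v x = c *s x" unfolding eigenspace_def by simp
      then have "T *v (X0 *v x) = c *s (T *v x)" by (simp add: vector_scalar_commute)
      moreover have "T *v (X0 *v x) = D *v (T *v x)" unfolding X0D
        by (simp add: matrix_vector_mul_assoc matrix_mul_assoc TTi)
      ultimately have "T *v x \<in> {v. D *v v = c *s v}" by simp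
      moreover have "x = Ti *v (T *v x)" by (simp add: matrix_vector_mul_assoc TTi)
      ultimately show "x \<in> (*v) Ti ` {v. D *v v = c *s v}" by blast
    next
      fix x assume "x \<in> (*v) Ti ` {v. D *v v = c *s v}"
      then obtain w where w: "D *v w = c *s w" "x = Ti *v w" by blast
      have "X0 *v x = Ti *v (D *v w)" unfolding X0D w(2)
        by (simp add: matrix_vector_mul_assoc matrix_mul_assoc[symmetric] TTi)
      then show "x \<in> eigenspace X0 c" using w unfolding eigenspace_def by (simp add: vector_scalar_commute)
    qed
    have "range ((*v) (Pr i)) = (*v) g ` eigenspace X0 (zeta i)"
      unfolding r1 r2 sc(4)[rule_format, symmetric] U_def image_comp
      by (simp add: o_def matrix_vector_mul_assoc)
    then have "vec.dim (range ((*v) (Pr i))) = vec.dim (eigenspace X0 (zeta i))"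
      using vec.dim_image_eq[OF matrix_vector_mul_linear_gen, of g] inj_matrix_vector_mult[OF g(1)]
      by (simp add: inj_on_subset)
    then show "vec.dim (range ((*v) (Pr i))) = kk i" using dims \<open>i < r\<close> by simp
  qed
  show ?thesis unfolding spec_def using inj s1 s2 s3 s4 by blast
qed

(* ---- A5 ---- *)
lemma mat_sandwich: "G ** (mat c ** P) ** F = mat c ** (G ** P ** (F::'a::comm_semiring_1^'p^'n))"
proof -
  have "G ** (mat c ** P) = mat c ** (G ** P)" by (rule mat_comm2)
  then show ?thesis by (simp add: matrix_mul_assoc)
qed

lemma spec_resolvent:
  assumes sp: "spec X r zeta kk Pr" and z: "z \<notin> zeta ` {..<r}"
  shows "(mat z - X) ** (\<Sum>i<r. mat (inverse (z - zeta i)) ** Pr i) = mat 1"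
proof -
  have "(mat z - X) ** (mat (inverse (z - zeta i)) ** Pr i) = Pr i" if i: "i < r" for i
  proof -
    have zi: "z - zeta i \<noteq> 0" using z i by auto
    have "(mat z - X) ** (mat (inverse (z - zeta i)) ** Pr i) = mat (inverse (z - zeta i)) ** ((mat z - X) ** Pr i)"
      by (rule mat_comm2)
    also have "(mat z - X) ** Pr i = mat (z - zeta i) ** Pr i"
      using sp i unfolding spec_def by (simp add: matrix_diff_rdistrib mat_diff[symmetric])
    finally show ?thesis using zi by (simp add: matrix_mul_assoc mat_mat)
  qed
  then have "(mat z - X) ** (\<Sum>i<r. mat (inverse (z - zeta i)) ** Pr i) = (\<Sum>i<r. Pr i)"
    by (simp add: matrix_sum_ldistrib)
  then show ?thesis using sp unfolding spec_def by simp
qed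

lemma spec_inv:
  assumes sp: "spec X r zeta kk Pr" and z: "z \<notin> zeta ` {..<r}"
  shows "invertible (mat z - X)" "matrix_inv (mat z - X) = (\<Sum>i<r. mat (inverse (z - zeta i)) ** Pr i)"
  using minv_unique[OF spec_resolvent[OF sp z]] by auto

lemma spec_transfer:
  assumes sp: "spec X r zeta kk Pr" and z: "z \<notin> zeta ` {..<r}"
  shows "transfer_map r zeta (X, Y, F, G) z = Y + (\<Sum>i<r. mat (inverse (z - zeta i)) ** (G ** Pr i ** F))"
proof -
  have "G ** (\<Sum>i<r. mat (inverse (z - zeta i)) ** Pr i) ** F = (\<Sum>i<r. mat (inverse (z - zeta i)) ** (G ** Pr i ** F))"
    by (simp add: matrix_sum_ldistrib matrix_sum_rdistrib mat_sandwich)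
  then show ?thesis unfolding transfer_map_def using z by (simp add: spec_inv[OF sp z])
qed

fun mprod :: "('a::semiring_1^'n^'n) list \<Rightarrow> 'a^'n^'n" where
  "mprod [] = mat 1" | "mprod (A # As) = A ** mprod As"

definition lagr :: "nat \<Rightarrow> (nat \<Rightarrow> complex) \<Rightarrow> nat \<Rightarrow> complex^'n^'n \<Rightarrow> complex^'n^'n" where
  "lagr r zeta i X = mat (inverse (prod_list (map (\<lambda>j. zeta i - zeta j) (filter (\<lambda>j. j \<noteq> i) [0..<r]))))
     ** mprod (map (\<lambda>j. X - mat (zeta j)) (filter (\<lambda>j. j \<noteq> i) [0..<r]))"

lemma mprod_proj:
  assumes sp: "spec X r zeta kk Pr" and m: "m < r"
  shows "mprod (map (\<lambda>j. X - mat (c j)) js) ** Pr m = mat (prod_list (map (\<lambda>j. zeta m - c j) js)) ** Pr m"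
proof (induction js)
  case Nil
  then show ?case by simp
next
  case (Cons j js)
  have XP: "(X - mat (c j)) ** Pr m = mat (zeta m - c j) ** Pr m"
    using sp m unfolding spec_def by (simp add: matrix_diff_rdistrib mat_diff[symmetric])
  have "mprod (map (\<lambda>j. X - mat (c j)) (j # js)) ** Pr m = (X - mat (c j)) ** (mprod (map (\<lambda>j. X - mat (c j)) js) ** Pr m)"
    by (simp add: matrix_mul_assoc)
  also have "\<dots> = mat (prod_list (map (\<lambda>j. zeta m - c j) js)) ** ((X - mat (c j)) ** Pr m)"
    unfolding Cons by (rule mat_comm2)
  also have "\<dots> = mat (prod_list (map (\<lambda>j. zeta m - c j) (j # js))) ** Pr m"
    unfolding XP by (simp add: matrix_mul_assoc mat_mat mult.commute)
  finally show ?case .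
qed

lemma lagr_eq:
  assumes sp: "spec X r zeta kk Pr" and i: "i < r"
  shows "lagr r zeta i X = Pr i"
proof -
  define js where "js = filter (\<lambda>j. j \<noteq> i) [0..<r]"
  have inj: "inj_on zeta {..<r}" using sp unfolding spec_def by simp
  have np: "prod_list (map (\<lambda>j. zeta i - zeta j) js) \<noteq> 0"
    using inj i unfolding js_def by (auto simp: prod_list_zero_iff inj_on_def)
  have "lagr r zeta i X = lagr r zeta i X ** (\<Sum>m<r. Pr m)" using sp unfolding spec_def by simp
  also have "\<dots> = (\<Sum>m<r. if m = i then Pr i else 0)"
    unfolding matrix_sum_ldistrib
  proof (rule sum.cong[OF refl])
    fix m assume m: "m \<in> {..<r}"
    have "lagr r zeta i X ** Pr m = mat (inverse (prod_list (map (\<lambda>j. zeta i - zeta j) js))) ** (mprod (map (\<lambda>j. X - mat (zeta j)) js) ** Pr m)"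
      unfolding lagr_def js_def[symmetric] by (simp add: matrix_mul_assoc)
    also have "\<dots> = mat (inverse (prod_list (map (\<lambda>j. zeta i - zeta j) js))) ** (mat (prod_list (map (\<lambda>j. zeta m - zeta j) js)) ** Pr m)"
      using mprod_proj[OF sp, of m zeta js] m by simp
    also have "\<dots> = (if m = i then Pr i else 0)"
    proof (cases "m = i")
      case True
      then show ?thesis using np by (simp add: matrix_mul_assoc mat_mat)
    next
      case False
      then have "m \<in> set js" using m unfolding js_def by auto
      then have "prod_list (map (\<lambda>j. zeta m - zeta j) js) = 0"
        by (auto simp: prod_list_zero_iff)
      then show ?thesis using False by simp
    qed
    finally show "lagr r zeta i X ** Pr m = (if m = i then Pr i else 0)" .
  qed
  also have "\<dots> = Pr i" using i by simp
  finally show ?thesis .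
qed

lemma mat_conj: fixes g :: "complex^'n^'n" assumes g: "invertible g" shows "g ** mat c ** matrix_inv g = (mat c :: complex^'n^'n)"
proof -
  have "g ** mat c = mat c ** g" by (rule mat_comm[symmetric])
  then have "g ** mat c ** matrix_inv g = mat c ** (g ** matrix_inv g)" by (simp add: matrix_mul_assoc)
  then show ?thesis using minv_r[OF g] by simp
qed

lemma mprod_conj:
  fixes g X :: "complex^'n^'n"
  assumes g: "invertible g"
  shows "mprod (map (\<lambda>j. g ** X ** matrix_inv g - mat (c j)) js) = g ** mprod (map (\<lambda>j. X - mat (c j)) js) ** matrix_inv g"
proof (induction js)
  case Nil
  then show ?case using mat_conj[OF g, of 1] by simp
next
  case (Cons j js)
  have e: "g ** X ** matrix_inv g - mat (c j) = g ** (X - mat (c j)) ** matrix_inv g"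
    using mat_conj[OF g, of "c j"] by (simp add: matrix_diff_ldistrib matrix_diff_rdistrib)
  have "mprod (map (\<lambda>j. g ** X ** matrix_inv g - mat (c j)) (j # js)) = (g ** X ** matrix_inv g - mat (c j)) ** mprod (map (\<lambda>j. g ** X ** matrix_inv g - mat (c j)) js)" by simp
  also have "\<dots> = (g ** (X - mat (c j)) ** matrix_inv g) ** (g ** mprod (map (\<lambda>j. X - mat (c j)) js) ** matrix_inv g)"
    using e Cons by simp
  also have "\<dots> = g ** ((X - mat (c j)) ** mprod (map (\<lambda>j. X - mat (c j)) js)) ** matrix_inv g"
    by (rule conj_mult[OF minv_l[OF g]])
  also have "\<dots> = g ** mprod (map (\<lambda>j. X - mat (c j)) (j # js)) ** matrix_inv g" by simp
  finally show ?case .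
qed

lemma lagr_conj:
  fixes g X :: "complex^'n^'n"
  assumes g: "invertible g"
  shows "lagr r zeta i (g ** X ** matrix_inv g) = g ** lagr r zeta i X ** matrix_inv g"
  unfolding lagr_def mprod_conj[OF g] by (rule conj_mat[symmetric])

lemma mprod_comm:
  fixes A X :: "complex^'n^'n"
  assumes AX: "A ** X = X ** A"
  shows "A ** mprod (map (\<lambda>j. X - mat (c j)) js) = mprod (map (\<lambda>j. X - mat (c j)) js) ** A"
proof (induction js)
  case Nil
  then show ?case by simp
next
  case (Cons j js)
  have e: "A ** (X - mat (c j)) = (X - mat (c j)) ** A"
    using AX by (simp add: matrix_diff_ldistrib matrix_diff_rdistrib mat_comm)
  have "A ** mprod (map (\<lambda>j. X - mat (c j)) (j # js)) = (A ** (X - mat (c j))) ** mprod (map (\<lambda>j. X - mat (c j)) js)"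
    by (simp add: matrix_mul_assoc)
  also have "\<dots> = (X - mat (c j)) ** (A ** mprod (map (\<lambda>j. X - mat (c j)) js))"
    unfolding e by (simp add: matrix_mul_assoc)
  also have "\<dots> = mprod (map (\<lambda>j. X - mat (c j)) (j # js)) ** A"
    unfolding Cons by (simp add: matrix_mul_assoc)
  finally show ?case .
qed

lemma lagr_comm:
  fixes A X :: "complex^'n^'n"
  assumes AX: "A ** X = X ** A"
  shows "A ** lagr r zeta i X = lagr r zeta i X ** A"
proof -
  let ?M = "mprod (map (\<lambda>j. X - mat (zeta j)) (filter (\<lambda>j. j \<noteq> i) [0..<r]))"
  let ?a = "inverse (prod_list (map (\<lambda>j. zeta i - zeta j) (filter (\<lambda>j. j \<noteq> i) [0..<r])))"
  have "A ** (mat ?a ** ?M) = mat ?a ** (A ** ?M)" by (rule mat_comm2)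
  also have "\<dots> = mat ?a ** (?M ** A)" by (subst mprod_comm[OF AX]) (rule refl)
  also have "\<dots> = (mat ?a ** ?M) ** A" by (simp add: matrix_mul_assoc)
  finally show ?thesis unfolding lagr_def .
qed

lemma spec_comm:
  assumes sp: "spec X r zeta kk Pr" and i: "i < r" and AX: "A ** X = X ** A"
  shows "A ** Pr i = Pr i ** A"
  using lagr_comm[OF AX, of r zeta i] lagr_eq[OF sp i] by simp

lemma tendsto_mmult:
  fixes A :: "'b \<Rightarrow> complex^'n^'m" and B :: "'b \<Rightarrow> complex^'p^'n"
  assumes "(A \<longlongrightarrow> A0) F" "(B \<longlongrightarrow> B0) F"
  shows "((\<lambda>x. A x ** B x) \<longlongrightarrow> A0 ** B0) F"
proof -
  have a: "((\<lambda>x. A x $ i $ k) \<longlongrightarrow> A0 $ i $ k) F" for i k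
    using tendsto_vec_nth[OF tendsto_vec_nth[OF assms(1)]] .
  have b: "((\<lambda>x. B x $ i $ k) \<longlongrightarrow> B0 $ i $ k) F" for i k
    using tendsto_vec_nth[OF tendsto_vec_nth[OF assms(2)]] .
  have e: "((\<lambda>x. (A x ** B x) $ i $ j) \<longlongrightarrow> (A0 ** B0) $ i $ j) F" for i j
    unfolding matrix_matrix_mult_def vec_lambda_beta
    by (rule tendsto_sum, rule tendsto_mult, rule a, rule b)
  show ?thesis by (rule vec_tendstoI, rule vec_tendstoI, rule e)
qed

lemma tendsto_mprod:
  fixes Xs :: "'b \<Rightarrow> complex^'n^'n"
  assumes "(Xs \<longlongrightarrow> X) F"
  shows "((\<lambda>x. mprod (map (\<lambda>j. Xs x - mat (c j)) js)) \<longlongrightarrow> mprod (map (\<lambda>j. X - mat (c j)) js)) F"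
proof (induction js)
  case Nil
  then show ?case by simp
next
  case (Cons j js)
  show ?case unfolding list.map mprod.simps
    by (rule tendsto_mmult[OF tendsto_diff[OF assms tendsto_const] Cons])
qed

lemma tendsto_lagr:
  fixes Xs :: "'b \<Rightarrow> complex^'n^'n"
  assumes "(Xs \<longlongrightarrow> X) F"
  shows "((\<lambda>x. lagr r zeta i (Xs x)) \<longlongrightarrow> lagr r zeta i X) F"
  unfolding lagr_def by (rule tendsto_mmult[OF tendsto_const tendsto_mprod[OF assms]])

(* ---- A6 ---- *)
lemma gl_act_simp: "gl_act g (X, Y, F, G) = (g ** X ** matrix_inv g, Y, g ** F, G ** matrix_inv g)"
  by (simp add: gl_act_def)

lemma gl_act_comp:
  fixes a b :: "complex^'k::finite^'k"
  assumes a: "invertible a" and b: "invertible b"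
  shows "gl_act (a ** b) q = gl_act a (gl_act b (q::('k,'l::finite) quad))"
proof -
  obtain X Y F G where q: "q = (X, Y, F, G)" by (cases q) auto
  show ?thesis unfolding q gl_act_simp minv_mult[OF a b] by (simp add: matrix_mul_assoc)
qed

lemma gl_act_one: "gl_act (mat 1) q = q"
  by (cases q) (simp add: gl_act_simp minv_one)

lemma stab_contra:
  fixes q q0 :: "('k::finite, 'l::finite) quad"
  assumes M: "q \<in> M0" and cl: "q0 \<in> closure (gl_orbit q)" and g: "invertible g" and st: "gl_act g q0 = q0"
  shows "g = mat 1"
proof -
  have "closed (gl_orbit q)" using M unfolding M0_def by simp
  then have "q0 \<in> gl_orbit q" using cl closure_closed by blast
  then obtain h where h: "invertible h" "q0 = gl_act h q" unfolding gl_orbit_def by blast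
  define g' where "g' = matrix_inv h ** g ** h"
  have hi: "invertible (matrix_inv h)" using minv_inv[OF h(1)] by simp
  have g'i: "invertible g'" unfolding g'_def by (intro invertible_mult hi g h(1))
  have "gl_act g' q = gl_act (matrix_inv h) (gl_act g (gl_act h q))"
    unfolding g'_def by (simp add: gl_act_comp invertible_mult hi g h(1))
  also have "\<dots> = gl_act (matrix_inv h) (gl_act h q)" using st h(2) by simp
  also have "\<dots> = q" by (simp add: gl_act_comp[symmetric] hi h(1) minv_l gl_act_one)
  finally have "g' = mat 1" using M g'i unfolding M0_def by blast
  then have "h ** g' ** matrix_inv h = mat 1" using minv_r[OF h(1)] by simp
  moreover have "h ** g' ** matrix_inv h = g"
    unfolding g'_def by (simp add: matrix_mul_assoc minv_r[OF h(1)])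
       (simp add: matrix_mul_assoc[symmetric] minv_r[OF h(1)])
  ultimately show ?thesis by simp
qed

definition sdot :: "complex^'n \<Rightarrow> complex^'n \<Rightarrow> complex" where
  "sdot u v = (\<Sum>a\<in>UNIV. u$a * v$a)"

definition outer :: "complex^'n \<Rightarrow> complex^'n \<Rightarrow> complex^'n^'n" where
  "outer v w = (\<chi> a b. v$a * w$b)"

definition gt :: "complex^'n \<Rightarrow> complex^'n \<Rightarrow> complex \<Rightarrow> complex^'n^'n" where
  "gt v w t = mat 1 + mat (t - 1) ** outer v w"

lemma outer_idem: "sdot w v = 1 \<Longrightarrow> outer v w ** outer v w = outer v w"
proof -
  assume d: "sdot w v = 1"
  have "(\<Sum>k\<in>UNIV. v$a * w$k * (v$k * w$b)) = v$a * w$b * (\<Sum>k\<in>UNIV. w$k * v$k)" for a b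
    by (simp add: sum_distrib_left mult_ac)
  then show ?thesis using d unfolding outer_def sdot_def matrix_matrix_mult_def
    by (simp add: vec_eq_iff)
qed

lemma mat_E_mult: "(mat a ** E) ** (mat b ** E') = mat (a * b) ** (E ** (E'::complex^'n^'n))"
proof -
  have "(mat a ** E) ** (mat b ** E') = mat a ** (E ** (mat b ** E'))" by (simp add: matrix_mul_assoc)
  also have "E ** (mat b ** E') = mat b ** (E ** E')" by (rule mat_comm2)
  finally show ?thesis by (simp add: matrix_mul_assoc mat_mat)
qed

lemma mat3_add: "mat a ** E + mat b ** E + mat c ** E = mat (a + b + c) ** (E::complex^'n^'n)"
  by (simp only: mat_add[symmetric] matrix_add_rdistrib)

lemma gt_inv:
  assumes d: "sdot w v = 1" and t: "t \<noteq> 0"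
  shows "gt v w t ** gt v w (inverse t) = mat 1"
proof -
  let ?E = "outer v w"
  have E2: "?E ** ?E = ?E" by (rule outer_idem[OF d])
  have "gt v w t ** gt v w (inverse t) = mat 1 + mat (t - 1) ** ?E + mat (inverse t - 1) ** ?E + mat ((t-1) * (inverse t - 1)) ** (?E ** ?E)"
    unfolding gt_def by (simp add: matrix_add_ldistrib matrix_add_rdistrib mat_E_mult add.assoc)
  also have "\<dots> = mat 1 + (mat (t - 1) ** ?E + mat (inverse t - 1) ** ?E + mat ((t-1) * (inverse t - 1)) ** ?E)"
    by (simp only: E2 add.assoc)
  also have "\<dots> = mat 1 + mat ((t - 1) + (inverse t - 1) + (t-1) * (inverse t - 1)) ** ?E"
    by (simp only: mat3_add)
  also have "(t - 1) + (inverse t - 1) + (t-1) * (inverse t - 1) = 0"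
    using t by (simp add: field_simps)
  finally show ?thesis by simp
qed

lemma gt_invertible:
  assumes d: "sdot w v = 1" and t: "t \<noteq> 0"
  shows "invertible (gt v w t)" "matrix_inv (gt v w t) = gt v w (inverse t)"
  using minv_unique[OF gt_inv[OF d t]] by auto

lemma outer_X:
  assumes Xv: "X *v v = c *s v" and wX: "w v* X = c *s w"
  shows "X ** outer v w = mat c ** outer v w" "outer v w ** X = mat c ** outer v w"
proof -
  have "(X ** outer v w) $ a $ b = c * (v $ a * w $ b)" for a b
  proof -
    have "(X ** outer v w) $ a $ b = (\<Sum>k\<in>UNIV. X$a$k * v$k) * w$b"
      unfolding outer_def matrix_matrix_mult_def by (simp add: sum_distrib_left sum_distrib_right mult_ac)
    also have "(\<Sum>k\<in>UNIV. X$a$k * v$k) = c * v$a"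
      using arg_cong[OF Xv, of "\<lambda>x. x $ a"] by (simp add: matrix_vector_mult_def)
    finally show ?thesis by (simp add: mult_ac)
  qed
  then show "X ** outer v w = mat c ** outer v w"
    unfolding mat_mult_left by (simp add: vec_eq_iff outer_def)
  have "(outer v w ** X) $ a $ b = c * (v $ a * w $ b)" for a b
  proof -
    have "(outer v w ** X) $ a $ b = v$a * (\<Sum>k\<in>UNIV. w$k * X$k$b)"
      unfolding outer_def matrix_matrix_mult_def by (simp add: sum_distrib_left mult_ac)
    also have "(\<Sum>k\<in>UNIV. w$k * X$k$b) = c * w$b"
      using arg_cong[OF wX, of "\<lambda>x. x $ b"] by (simp add: vector_matrix_mult_def)
    finally show ?thesis by (simp add: mult_ac)
  qed
  then show "outer v w ** X = mat c ** outer v w"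
    unfolding mat_mult_left by (simp add: vec_eq_iff outer_def)
qed

(* ---- A7 ---- *)
lemma tendsto_mat:
  assumes "(f \<longlongrightarrow> c) F"
  shows "((\<lambda>x. mat (f x) :: complex^'n^'n) \<longlongrightarrow> mat c) F"
proof (rule vec_tendstoI, rule vec_tendstoI)
  fix i j :: 'n
  show "((\<lambda>x. mat (f x) $ i $ j) \<longlongrightarrow> mat c $ i $ j) F"
    by (cases "i = j") (simp_all add: mat_one_entry assms)
qed

lemma lim_inv_suc: "(\<lambda>n. inverse (of_nat (Suc n)) - 1 :: complex) \<longlonglongrightarrow> -1"
proof -
  have "(\<lambda>n. complex_of_real (inverse (real (Suc n)))) \<longlonglongrightarrow> complex_of_real 0"
    by (rule tendsto_of_real[OF LIMSEQ_inverse_real_of_nat])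
  then have "(\<lambda>n. inverse (of_nat (Suc n)) :: complex) \<longlonglongrightarrow> 0"
    by (simp add: of_real_inverse)
  then show ?thesis using tendsto_diff[OF _ tendsto_const, of _ 0 sequentially 1] by simp
qed

lemma inv_suc_nz: "inverse (of_nat (Suc n) :: complex) \<noteq> 0"
  by (rule nonzero_imp_inverse_nonzero[OF of_nat_neq_0])

lemma mat_m1: "mat (-1) ** M = - (M::complex^'m^'n)"
  unfolding mat_mult_left by (simp add: vec_eq_iff)

lemma gt_X:
  assumes Xv: "X *v v = c *s v" and wX: "w v* X = c *s w" and d: "sdot w v = 1" and t: "t \<noteq> 0"
  shows "gt v w t ** X ** matrix_inv (gt v w t) = X"
proof -
  have "gt v w t ** X = X + mat (t - 1) ** (mat c ** outer v w)"
    unfolding gt_def by (simp add: matrix_add_rdistrib matrix_mul_assoc[symmetric] outer_X(2)[OF Xv wX])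
  moreover have "X ** gt v w t = X + mat (t - 1) ** (mat c ** outer v w)"
    unfolding gt_def matrix_add_ldistrib mat_comm2[of X] outer_X(1)[OF Xv wX] by simp
  ultimately have "gt v w t ** X = X ** gt v w t" by simp
  then have "gt v w t ** X ** matrix_inv (gt v w t) = X ** (gt v w t ** matrix_inv (gt v w t))"
    by (simp add: matrix_mul_assoc)
  then show ?thesis using minv_r[OF gt_invertible(1)[OF d t]] by simp
qed

lemma outer_v: "outer v w *v v = sdot w v *s v"
  unfolding outer_def sdot_def matrix_vector_mult_def
  by (simp add: vec_eq_iff sum_distrib_left mult_ac)

lemma sdot_nz: "sdot w v = 1 \<Longrightarrow> outer v w \<noteq> 0"
  using outer_v[of v w] by (auto simp: sdot_def)

lemma caseA:
  fixes q :: "('k::finite, 'l::finite) quad"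
  assumes M: "q \<in> M0" and q: "q = (X, Y, F, G)"
    and Xv: "X *v v = c *s v" and wX: "w v* X = c *s w" and d: "sdot w v = 1" and Gv: "G *v v = 0"
  shows False
proof -
  let ?E = "outer v w"
  have GE: "G ** ?E = 0"
  proof -
    have "(G ** ?E) $ a $ b = (G *v v) $ a * w $ b" for a b
      unfolding outer_def matrix_matrix_mult_def matrix_vector_mult_def
      by (simp add: sum_distrib_right sum_distrib_left mult_ac)
    then show ?thesis using Gv by (simp add: vec_eq_iff)
  qed
  have Ggt: "G ** gt v w s = G" for s
    unfolding gt_def by (simp add: matrix_add_ldistrib mat_comm2 GE)
  have act: "gl_act (gt v w t) q = (X, Y, F + mat (t - 1) ** (?E ** F), G)" if t: "t \<noteq> 0" for t
  proof -
    have X': "gt v w t ** X ** matrix_inv (gt v w t) = X" by (rule gt_X[OF Xv wX d t])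
    have "gt v w t ** F = F + mat (t - 1) ** (?E ** F)"
      unfolding gt_def by (simp add: matrix_add_rdistrib matrix_mul_assoc)
    have I': "matrix_inv (gt v w t) = gt v w (inverse t)" by (rule gt_invertible(2)[OF d t])
    show ?thesis unfolding q gl_act_simp X' unfolding I' Ggt \<open>gt v w t ** F = _\<close> by simp
  qed
  define q0 where "q0 = (X, Y, F - ?E ** F, G)"
  have "(\<lambda>n. gl_act (gt v w (inverse (of_nat (Suc n)))) q) \<longlonglongrightarrow> (X, Y, F + mat (-1) ** (?E ** F), G)"
    unfolding act[OF inv_suc_nz]
    by (rule tendsto_Pair[OF tendsto_const tendsto_Pair[OF tendsto_const tendsto_Pair[OF
          tendsto_add[OF tendsto_const tendsto_mmult[OF tendsto_mat[OF lim_inv_suc] tendsto_const]] tendsto_const]]])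
  moreover have "F + mat (-1) ** (?E ** F) = F - ?E ** F" by (simp add: mat_m1)
  ultimately have lim: "(\<lambda>n. gl_act (gt v w (inverse (of_nat (Suc n)))) q) \<longlonglongrightarrow> q0"
    unfolding q0_def by simp
  have mem: "\<forall>n. gl_act (gt v w (inverse (of_nat (Suc n)))) q \<in> gl_orbit q"
    unfolding gl_orbit_def using gt_invertible(1)[OF d inv_suc_nz] by blast
  have cl: "q0 \<in> closure (gl_orbit q)"
    unfolding closure_sequential by (rule exI, rule conjI[OF mem lim])
  have two: "(2::complex) \<noteq> 0" by simp
  have X2: "gt v w 2 ** X ** matrix_inv (gt v w 2) = X" by (rule gt_X[OF Xv wX d two])
  have "gl_act (gt v w 2) q0 = (X, Y, gt v w 2 ** (F - ?E ** F), G)"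
    unfolding q0_def gl_act_simp X2 unfolding gt_invertible(2)[OF d two] Ggt by simp
  also have "gt v w 2 ** (F - ?E ** F) = F - ?E ** F"
  proof -
    have g2: "gt v w 2 = mat 1 + ?E" unfolding gt_def by simp
    have "(mat 1 + ?E) ** (F - ?E ** F) = F - ?E ** F + (?E ** F - (?E ** ?E) ** F)"
      by (simp only: matrix_add_rdistrib matrix_diff_ldistrib matrix_mul_assoc matrix_mul_lid) (simp add: algebra_simps)
    then show ?thesis unfolding g2 outer_idem[OF d] by simp
  qed
  finally have "gl_act (gt v w 2) q0 = q0" unfolding q0_def .
  then have "gt v w 2 = mat 1" using stab_contra[OF M cl gt_invertible(1)[OF d two]] by simp
  then have "?E = 0" unfolding gt_def by simp
  then show False using sdot_nz[OF d] by simp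
qed

lemma caseB:
  fixes q :: "('k::finite, 'l::finite) quad"
  assumes M: "q \<in> M0" and q: "q = (X, Y, F, G)"
    and Xv: "X *v v = c *s v" and wX: "w v* X = c *s w" and d: "sdot w v = 1" and wF: "w v* F = 0"
  shows False
proof -
  let ?E = "outer v w"
  have EF: "?E ** F = 0"
  proof -
    have "(?E ** F) $ a $ b = v $ a * (w v* F) $ b" for a b
      unfolding outer_def matrix_matrix_mult_def vector_matrix_mult_def
      by (simp add: sum_distrib_left mult_ac)
    then show ?thesis using wF by (simp add: vec_eq_iff)
  qed
  have gtF: "gt v w s ** F = F" for s
    unfolding gt_def by (simp add: matrix_add_rdistrib matrix_mul_assoc[symmetric] EF)
  have ii: "inverse (inverse (of_nat (Suc n))) = (of_nat (Suc n) :: complex)" for n by simp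
  have act: "gl_act (gt v w (inverse t)) q = (X, Y, F, G + mat (t - 1) ** (G ** ?E))" if t: "t \<noteq> 0" for t
  proof -
    have t': "inverse t \<noteq> 0" using t by simp
    have X': "gt v w (inverse t) ** X ** matrix_inv (gt v w (inverse t)) = X" by (rule gt_X[OF Xv wX d t'])
    have I': "matrix_inv (gt v w (inverse t)) = gt v w t" using gt_invertible(2)[OF d t'] t by simp
    have "G ** gt v w t = G + mat (t - 1) ** (G ** ?E)"
      unfolding gt_def by (simp add: matrix_add_ldistrib mat_comm2)
    then show ?thesis unfolding q gl_act_simp X' unfolding gtF I' by simp
  qed
  define q0 where "q0 = (X, Y, F, G - G ** ?E)"
  have "(\<lambda>n. gl_act (gt v w (inverse (inverse (of_nat (Suc n))))) q) \<longlonglongrightarrow> (X, Y, F, G + mat (-1) ** (G ** ?E))"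
    unfolding act[OF inv_suc_nz]
    by (rule tendsto_Pair[OF tendsto_const tendsto_Pair[OF tendsto_const tendsto_Pair[OF tendsto_const
          tendsto_add[OF tendsto_const tendsto_mmult[OF tendsto_mat[OF lim_inv_suc] tendsto_const]]]]])
  moreover have "G + mat (-1) ** (G ** ?E) = G - G ** ?E" by (simp add: mat_m1)
  ultimately have lim: "(\<lambda>n. gl_act (gt v w (inverse (inverse (of_nat (Suc n))))) q) \<longlonglongrightarrow> q0"
    unfolding q0_def by simp
  have mem: "\<forall>n. gl_act (gt v w (inverse (inverse (of_nat (Suc n))))) q \<in> gl_orbit q"
  proof
    fix n
    have "(of_nat (Suc n) :: complex) \<noteq> 0" by (rule of_nat_neq_0)
    then show "gl_act (gt v w (inverse (inverse (of_nat (Suc n))))) q \<in> gl_orbit q"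
      unfolding gl_orbit_def ii using gt_invertible(1)[OF d] by blast
  qed
  have cl: "q0 \<in> closure (gl_orbit q)"
    unfolding closure_sequential by (rule exI, rule conjI[OF mem lim])
  have two: "(2::complex) \<noteq> 0" by simp
  have GEE: "(G - G ** ?E) ** ?E = 0"
    using outer_idem[OF d] by (simp add: matrix_diff_rdistrib matrix_mul_assoc[symmetric])
  have X2: "gt v w 2 ** X ** matrix_inv (gt v w 2) = X" by (rule gt_X[OF Xv wX d two])
  have "gl_act (gt v w 2) q0 = (X, Y, F, (G - G ** ?E) ** gt v w (inverse 2))"
    unfolding q0_def gl_act_simp X2 unfolding gtF gt_invertible(2)[OF d two] by simp
  also have "(G - G ** ?E) ** gt v w (inverse 2) = G - G ** ?E"
    unfolding gt_def by (simp add: matrix_add_ldistrib mat_comm2 GEE)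
  finally have "gl_act (gt v w 2) q0 = q0" unfolding q0_def .
  then have "gt v w 2 = mat 1" using stab_contra[OF M cl gt_invertible(1)[OF d two]] by simp
  then have "?E = 0" unfolding gt_def by simp
  then show False using sdot_nz[OF d] by simp
qed

(* ---- A8 ---- *)
lemma sdot_axis: "sdot (axis a x) v = x * v$a" "sdot u (axis a x) = u$a * x"
proof -
  have "sdot (axis a x) v = (\<Sum>k\<in>UNIV. if k = a then x * v$a else 0)"
    unfolding sdot_def axis_def by (rule sum.cong) auto
  then show "sdot (axis a x) v = x * v$a" by simp
  have "sdot u (axis a x) = (\<Sum>k\<in>UNIV. if k = a then u$a * x else 0)"
    unfolding sdot_def axis_def by (rule sum.cong) auto
  then show "sdot u (axis a x) = u$a * x" by simp
qed

lemma sdot_vm: "sdot (u v* M) v = sdot u (M *v v)"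
proof -
  have "(\<Sum>a\<in>UNIV. (\<Sum>i\<in>UNIV. u$i * M$i$a) * v$a) = (\<Sum>a\<in>UNIV. \<Sum>i\<in>UNIV. u$i * M$i$a * v$a)"
    by (simp add: sum_distrib_right)
  also have "\<dots> = (\<Sum>i\<in>UNIV. \<Sum>a\<in>UNIV. u$i * M$i$a * v$a)" by (rule sum.swap)
  also have "\<dots> = (\<Sum>i\<in>UNIV. u$i * (\<Sum>a\<in>UNIV. M$i$a * v$a))" by (simp add: sum_distrib_left mult.assoc)
  finally show ?thesis by (simp add: sdot_def vector_matrix_mult_def matrix_vector_mult_def)
qed

lemma mv_mat: "(mat c ** M) *v v = c *s (M *v (v::complex^'n))"
  unfolding mat_mult_left by (simp add: vec_eq_iff matrix_vector_mult_def sum_distrib_left mult_ac)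

lemma vm_mat: "u v* (mat c ** M) = c *s (u v* (M::complex^'m^'n))"
  unfolding mat_mult_left vector_matrix_mult_def by (simp add: vec_eq_iff sum_distrib_left mult_ac)

lemma nz_coord: "v \<noteq> 0 \<Longrightarrow> \<exists>a. v $ a \<noteq> 0"
  by (auto simp: vec_eq_iff)

lemma claimA:
  fixes X :: "complex^'k::finite^'k" and G :: "complex^'k^'l::finite"
  assumes sp: "spec X r zeta kk Pr" and M: "(X, Y, F, G) \<in> M0" and i: "i < r"
    and Pv: "Pr i *v v = v" and Gv: "G *v v = 0"
  shows "v = 0"
proof (rule ccontr)
  assume "v \<noteq> 0"
  then obtain a where va: "v $ a \<noteq> 0" using nz_coord by blast
  define w where "w = axis a (inverse (v$a)) v* Pr i"
  have d: "sdot w v = 1" unfolding w_def sdot_vm Pv sdot_axis using va by simp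
  have XP: "X ** Pr i = mat (zeta i) ** Pr i" "Pr i ** X = mat (zeta i) ** Pr i"
    using sp i unfolding spec_def by auto
  have Xv: "X *v v = zeta i *s v"
  proof -
    have "X *v (Pr i *v v) = (X ** Pr i) *v v" by (rule matrix_vector_mul_assoc)
    then have "X *v v = (X ** Pr i) *v v" using Pv by simp
    then show ?thesis using Pv by (simp add: XP mv_mat)
  qed
  have wX: "w v* X = zeta i *s w"
    unfolding w_def vector_matrix_mul_assoc XP vm_mat ..
  show False by (rule caseA[OF M refl Xv wX d Gv])
qed

lemma claimB:
  fixes X :: "complex^'k::finite^'k" and F :: "complex^'l::finite^'k"
  assumes sp: "spec X r zeta kk Pr" and M: "(X, Y, F, G) \<in> M0" and i: "i < r"
    and Pu: "u v* Pr i = u" and uF: "u v* F = 0"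
  shows "u = 0"
proof (rule ccontr)
  assume "u \<noteq> 0"
  then obtain a where ua: "u $ a \<noteq> 0" using nz_coord by blast
  define v where "v = Pr i *v axis a (inverse (u$a))"
  have d: "sdot u v = 1" unfolding v_def sdot_vm[symmetric] Pu sdot_axis using ua by simp
  have XP: "X ** Pr i = mat (zeta i) ** Pr i" "Pr i ** X = mat (zeta i) ** Pr i"
    using sp i unfolding spec_def by auto
  have Xv: "X *v v = zeta i *s v"
    unfolding v_def matrix_vector_mul_assoc XP mv_mat ..
  have uX: "u v* X = zeta i *s u"
  proof -
    have "(u v* Pr i) v* X = u v* (Pr i ** X)" by (rule vector_matrix_mul_assoc)
    then have "u v* X = u v* (Pr i ** X)" using Pu by simp
    then show ?thesis using Pu by (simp add: XP vm_mat)
  qed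
  show False by (rule caseB[OF M refl Xv uX d uF])
qed

lemma idem_range:
  fixes P :: "'a::field^'n^'n"
  assumes "P ** P = P"
  shows "x \<in> range ((*v) P) \<longleftrightarrow> P *v x = x"
proof
  assume "x \<in> range ((*v) P)"
  then obtain y where "x = P *v y" by blast
  then show "P *v x = x" using assms by (simp add: matrix_vector_mul_assoc)
next
  assume "P *v x = x"
  then show "x \<in> range ((*v) P)" by (metis rangeI)
qed

lemma range_subspace: "vec.subspace (range ((*v) (A::'a::field^'n^'m)))"
  using vec.linear_subspace_image[OF matrix_vector_mul_linear_gen vec.subspace_UNIV, of A] by simp

lemma range_mult: "range ((*v) (A ** B)) = (*v) A ` range ((*v) B)"
  by (auto simp: matrix_vector_mul_assoc[symmetric] image_iff)

lemma dim_inj_image: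
  fixes A :: "'a::field^'n^'m"
  assumes S: "vec.subspace S" and inj: "\<And>x. x \<in> S \<Longrightarrow> A *v x = 0 \<Longrightarrow> x = 0"
  shows "vec.dim ((*v) A ` S) = vec.dim S"
proof -
  have "inj_on ((*v) A) S"
  proof (rule inj_onI)
    fix x y assume "x \<in> S" "y \<in> S" "A *v x = A *v y"
    then have "x - y \<in> S" "A *v (x - y) = 0" using vec.subspace_diff[OF S] by (auto simp: matrix_vector_mult_diff_distrib)
    then show "x = y" using inj[of "x - y"] by simp
  qed
  moreover have "vec.span S = S" using S by (simp only: vec.span_eq_iff)
  ultimately have "inj_on ((*v) A) (vec.span S)" by (simp only:)
  then show ?thesis by (rule vec.dim_image_eq[OF matrix_vector_mul_linear_gen])
qed

lemma range_eq_dim: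
  fixes A :: "'a::field^'n^'m" and B :: "'a^'p^'m"
  assumes sub: "range ((*v) A) \<subseteq> range ((*v) B)" and d: "vec.dim (range ((*v) B)) \<le> vec.dim (range ((*v) A))"
  shows "range ((*v) A) = range ((*v) B)"
  using vec.subspace_dim_equal[OF range_subspace range_subspace sub d] .

lemma right_inv:
  fixes A :: "'a::field^'n^'m" and B :: "'a^'p^'m"
  assumes "range ((*v) B) \<subseteq> range ((*v) A)"
  shows "\<exists>M. A ** M = B"
proof -
  have "\<forall>a. \<exists>y. A *v y = B *v axis a 1"
  proof
    fix a
    have "B *v axis a 1 \<in> range ((*v) A)" using assms by blast
    then show "\<exists>y. A *v y = B *v axis a 1" by (metis imageE)
  qed
  then obtain y where y: "\<And>a. A *v y a = B *v axis a 1" using choice[OF \<open>\<forall>a. _\<close>] by blast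
  define M where "M = transpose (\<chi> a. y a)"
  have "(A ** M) $ i $ a = B $ i $ a" for i a
  proof -
    have "(A ** M) $ i $ a = (A *v y a) $ i"
      unfolding M_def by (simp add: matrix_matrix_mult_def matrix_vector_mult_def transpose_def)
    also have "\<dots> = (B *v axis a 1) $ i" by (simp add: y)
    also have "\<dots> = B $ i $ a" by (simp add: column_mv[symmetric] column_def)
    finally show ?thesis .
  qed
  then show ?thesis by (auto simp: vec_eq_iff)
qed

lemma spec_idem: "spec X r zeta kk Pr \<Longrightarrow> i < r \<Longrightarrow> Pr i ** Pr i = Pr i"
  unfolding spec_def by auto

lemma part1_ranges:
  fixes X :: "complex^'k::finite^'k" and F :: "complex^'l::finite^'k" and G :: "complex^'k^'l"
  assumes sp: "spec X r zeta kk Pr" and M: "(X, Y, F, G) \<in> M0" and i: "i < r"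
  shows "range ((*v) (Pr i ** F)) = range ((*v) (Pr i))"
    "rank (G ** Pr i ** F) = kk i"
    "\<exists>Mi. Pr i ** F ** Mi = Pr i"
    "\<exists>Ni. Ni ** G ** Pr i = Pr i"
proof -
  let ?P = "Pr i"
  let ?V = "range ((*v) ?P)"
  have idem: "?P ** ?P = ?P" using spec_idem[OF sp i] .
  have tidem: "transpose ?P ** transpose ?P = transpose ?P"
    using arg_cong[OF idem, of transpose] by (simp add: matrix_transpose_mul)
  have dimV: "vec.dim ?V = kk i" using sp i unfolding spec_def by auto
  have rP: "rank ?P = kk i" using dimV rank_eq_dim_range[of ?P] by simp
  have sub1: "range ((*v) (?P ** F)) \<subseteq> ?V" by (auto simp: matrix_vector_mul_assoc[symmetric])
  have "rank (?P ** F) = rank (transpose F ** transpose ?P)"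
    using rank_transpose_gen[of "?P ** F"] by (simp add: matrix_transpose_mul)
  also have "\<dots> = vec.dim ((*v) (transpose F) ` range ((*v) (transpose ?P)))"
    by (simp add: rank_eq_dim_range range_mult)
  also have "\<dots> = vec.dim (range ((*v) (transpose ?P)))"
  proof (rule dim_inj_image[OF range_subspace])
    fix x assume x: "x \<in> range ((*v) (transpose ?P))" and "transpose F *v x = 0"
    then have "x v* F = 0" by simp
    moreover have "x v* ?P = x" using x idem_range[OF tidem] by simp
    ultimately show "x = 0" using claimB[OF sp M i] by blast
  qed
  also have "\<dots> = kk i" using rP rank_transpose_gen[of ?P] rank_eq_dim_range[of "transpose ?P"] by simp
  finally have "vec.dim (range ((*v) (?P ** F))) = kk i" using rank_eq_dim_range[of "?P ** F"] by simp
  then show surj: "range ((*v) (?P ** F)) = ?V"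
    using range_eq_dim[OF sub1] dimV by simp
  have injG: "\<And>x. x \<in> ?V \<Longrightarrow> G *v x = 0 \<Longrightarrow> x = 0"
    using claimA[OF sp M i] idem_range[OF idem] by blast
  have "rank (G ** ?P ** F) = vec.dim ((*v) G ` range ((*v) (?P ** F)))"
    by (simp add: rank_eq_dim_range range_mult matrix_mul_assoc[symmetric])
  also have "\<dots> = kk i" unfolding surj using dim_inj_image[OF range_subspace[of "Pr i"] injG] dimV by simp
  finally show "rank (G ** ?P ** F) = kk i" .
  show "\<exists>Mi. ?P ** F ** Mi = ?P" using right_inv[of ?P "?P ** F"] surj by simp
  have sub2: "range ((*v) (transpose ?P ** transpose G)) \<subseteq> range ((*v) (transpose ?P))"
    by (auto simp: matrix_vector_mul_assoc[symmetric])
  have "vec.dim (range ((*v) (transpose ?P ** transpose G))) = rank (G ** ?P)"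
    using rank_transpose_gen[of "G ** ?P"] rank_eq_dim_range[of "transpose ?P ** transpose G"] by (simp add: matrix_transpose_mul)
  also have "\<dots> = vec.dim ((*v) G ` ?V)" by (simp add: rank_eq_dim_range range_mult)
  also have "\<dots> = kk i" using dim_inj_image[OF range_subspace[of "Pr i"] injG] dimV by simp
  also have "\<dots> = vec.dim (range ((*v) (transpose ?P)))" using rP rank_transpose_gen[of ?P] rank_eq_dim_range[of "transpose ?P"] by simp
  finally have "range ((*v) (transpose ?P ** transpose G)) = range ((*v) (transpose ?P))"
    using range_eq_dim[OF sub2] by simp
  then obtain N' where "transpose ?P ** transpose G ** N' = transpose ?P"
    using right_inv[of "transpose ?P" "transpose ?P ** transpose G"] by auto
  then have "transpose (transpose ?P ** transpose G ** N') = ?P" by simp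
  moreover have "transpose (transpose ?P ** transpose G ** N') = transpose N' ** G ** ?P"
    by (simp add: matrix_transpose_mul matrix_mul_assoc)
  ultimately have "transpose N' ** G ** ?P = ?P" by simp
  then show "\<exists>Ni. Ni ** G ** ?P = ?P" by blast
qed

(* ---- A9 ---- *)
lemma spec_facts:
  assumes "spec X r zeta kk Pr"
  shows "inj_on zeta {..<r}" "(\<Sum>i<r. Pr i) = mat 1"
    "\<And>i j. i < r \<Longrightarrow> j < r \<Longrightarrow> Pr i ** Pr j = (if i = j then Pr i else 0)"
    "\<And>i. i < r \<Longrightarrow> X ** Pr i = mat (zeta i) ** Pr i"
    "\<And>i. i < r \<Longrightarrow> Pr i ** X = mat (zeta i) ** Pr i"
    "\<And>i. i < r \<Longrightarrow> vec.dim (range ((*v) (Pr i))) = kk i"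
  using assms unfolding spec_def by auto

lemma sum_proj_r:
  assumes sp: "spec X r zeta kk Pr" and i: "i < r"
  shows "(\<Sum>j<r. A j ** Pr j) ** Pr i = A i ** Pr i"
proof -
  have "(\<Sum>j<r. A j ** Pr j) ** Pr i = (\<Sum>j<r. if j = i then A i ** Pr i else 0)"
    unfolding matrix_sum_rdistrib
  proof (rule sum.cong[OF refl])
    fix j assume "j \<in> {..<r}"
    then show "A j ** Pr j ** Pr i = (if j = i then A i ** Pr i else 0)"
      using spec_facts(3)[OF sp, of j i] i by (simp add: matrix_mul_assoc[symmetric])
  qed
  also have "\<dots> = A i ** Pr i" using i by simp
  finally show ?thesis .
qed

lemma sum_proj_l:
  assumes sp: "spec X r zeta kk Pr" and i: "i < r"
  shows "Pr i ** (\<Sum>j<r. Pr j ** A j) = Pr i ** A i"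
proof -
  have "Pr i ** (\<Sum>j<r. Pr j ** A j) = (\<Sum>j<r. if j = i then Pr i ** A i else 0)"
    unfolding matrix_sum_ldistrib
  proof (rule sum.cong[OF refl])
    fix j assume "j \<in> {..<r}"
    then show "Pr i ** (Pr j ** A j) = (if j = i then Pr i ** A i else 0)"
      using spec_facts(3)[OF sp, of i j] i by (simp add: matrix_mul_assoc)
  qed
  also have "\<dots> = Pr i ** A i" using i by simp
  finally show ?thesis .
qed

lemma eq_by_proj_r:
  assumes sp: "spec X r zeta kk Pr" and h: "\<And>i. i < r \<Longrightarrow> A ** Pr i = B ** Pr i"
  shows "A = B"
proof -
  have "A = A ** (\<Sum>i<r. Pr i)" using spec_facts(2)[OF sp] by simp
  also have "\<dots> = (\<Sum>i<r. B ** Pr i)" unfolding matrix_sum_ldistrib using h by simp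
  also have "\<dots> = B" unfolding matrix_sum_ldistrib[symmetric] using spec_facts(2)[OF sp] by simp
  finally show ?thesis .
qed

lemma eq_by_proj_l:
  assumes sp: "spec X r zeta kk Pr" and h: "\<And>i. i < r \<Longrightarrow> Pr i ** A = Pr i ** B"
  shows "A = B"
proof -
  have "A = (\<Sum>i<r. Pr i) ** A" using spec_facts(2)[OF sp] by simp
  also have "\<dots> = (\<Sum>i<r. Pr i ** B)" unfolding matrix_sum_rdistrib using h by simp
  also have "\<dots> = B" unfolding matrix_sum_rdistrib[symmetric] using spec_facts(2)[OF sp] by simp
  finally show ?thesis .
qed

(* ---- B1 ---- *)
lemma pf_scalar:
  fixes zeta a :: "nat \<Rightarrow> complex" and d :: complex
  assumes inj: "inj_on zeta {..<r}"
    and h: "\<And>z. z \<notin> zeta ` {..<r} \<Longrightarrow> d + (\<Sum>i<r. a i * inverse (z - zeta i)) = 0"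
  shows "\<forall>i<r. a i = 0" "d = 0"
proof -
  show ai: "\<forall>j<r. a j = 0"
  proof (intro allI impI)
    fix j assume j: "j < r"
    define f where "f z = (z - zeta j) * d + a j + (\<Sum>i\<in>{..<r}-{j}. a i * ((z - zeta j) * inverse (z - zeta i)))" for z
    have nz: "zeta j - zeta i \<noteq> 0" if "i \<in> {..<r}-{j}" for i
      using inj j that by (auto simp: inj_on_def)
    have lim1: "(f \<longlongrightarrow> f (zeta j)) (at (zeta j))"
      unfolding f_def
      by (intro tendsto_intros tendsto_sum) (use nz in auto)
    have fj: "f (zeta j) = a j" unfolding f_def by simp
    have ev: "eventually (\<lambda>z. z \<notin> zeta ` {..<r}) (at (zeta j))"
    proof -
      have "eventually (\<lambda>z. \<forall>y\<in>zeta ` {..<r}. z \<noteq> y) (at (zeta j))"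
        by (rule eventually_ball_finite) (auto intro: eventually_neq_at_within)
      then show ?thesis by (rule eventually_mono) auto
    qed
    have "eventually (\<lambda>z. f z = 0) (at (zeta j))"
    proof (rule eventually_mono[OF ev])
      fix z assume z: "z \<notin> zeta ` {..<r}"
      then have zj: "z - zeta j \<noteq> 0" using j by auto
      have "(\<Sum>i<r. a i * inverse (z - zeta i)) = a j * inverse (z - zeta j) + (\<Sum>i\<in>{..<r}-{j}. a i * inverse (z - zeta i))"
        using j by (simp add: sum.remove[of "{..<r}" j])
      then have "0 = (z - zeta j) * (d + a j * inverse (z - zeta j) + (\<Sum>i\<in>{..<r}-{j}. a i * inverse (z - zeta i)))"
        using h[OF z] by (simp add: add.assoc)
      also have "\<dots> = f z" unfolding f_def using zj
        by (simp add: distrib_left sum_distrib_left mult_ac)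
      finally show "f z = 0" by simp
    qed
    then have lim2: "(f \<longlongrightarrow> 0) (at (zeta j))" by (rule tendsto_eventually)
    show "a j = 0" using tendsto_unique[OF at_neq_bot lim1 lim2] fj by simp
  qed
  obtain z :: complex where z: "z \<notin> zeta ` {..<r}"
    using ex_new_if_finite[OF infinite_UNIV_char_0] by blast
  show "d = 0" using h[OF z] ai by simp
qed

lemma pf_matrix:
  fixes zeta :: "nat \<Rightarrow> complex" and Y Y' :: "complex^'l^'l"
  assumes inj: "inj_on zeta {..<r}"
    and h: "\<And>z. z \<notin> zeta ` {..<r} \<Longrightarrow> Y + (\<Sum>i<r. mat (inverse (z - zeta i)) ** R i) = Y' + (\<Sum>i<r. mat (inverse (z - zeta i)) ** R' i)"
  shows "Y = Y'" "\<forall>i<r. R i = R' i"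
proof -
  have e: "\<forall>i<r. R i $ a $ b - R' i $ a $ b = 0" "Y $ a $ b - Y' $ a $ b = 0" for a b
  proof -
    have "\<And>z. z \<notin> zeta ` {..<r} \<Longrightarrow> (Y $ a $ b - Y' $ a $ b) + (\<Sum>i<r. (R i $ a $ b - R' i $ a $ b) * inverse (z - zeta i)) = 0"
    proof -
      fix z assume z: "z \<notin> zeta ` {..<r}"
      have "(Y + (\<Sum>i<r. mat (inverse (z - zeta i)) ** R i)) $ a $ b = (Y' + (\<Sum>i<r. mat (inverse (z - zeta i)) ** R' i)) $ a $ b"
        using h[OF z] by simp
      then show "(Y $ a $ b - Y' $ a $ b) + (\<Sum>i<r. (R i $ a $ b - R' i $ a $ b) * inverse (z - zeta i)) = 0"
        unfolding mat_mult_left by (simp add: sum_subtractf left_diff_distrib mult_ac algebra_simps)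
    qed
    from pf_scalar[OF inj this]
    show "\<forall>i<r. R i $ a $ b - R' i $ a $ b = 0" "Y $ a $ b - Y' $ a $ b = 0" by auto
  qed
  show "Y = Y'" using e(2) by (simp add: vec_eq_iff)
  show "\<forall>i<r. R i = R' i" using e(1) by (simp add: vec_eq_iff)
qed

(* ---- B2 ---- *)
lemma inj_cancel:
  fixes N :: "complex^'l^'k" and G :: "complex^'k^'l" and P Z W :: "complex^'m^'k"
  assumes NGP: "N ** G ** P' = P'" and P'P': "P' ** P' = P'" and PZ: "P' ** Z = Z" and PW: "P' ** W = W"
    and GZ: "G ** P' ** Z = G ** P' ** W"
  shows "Z = W"
proof -
  have "Z = N ** G ** P' ** Z" using NGP PZ by simp
  also have "\<dots> = N ** (G ** P' ** Z)" by (simp add: matrix_mul_assoc)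
  also have "\<dots> = N ** (G ** P' ** W)" using GZ by simp
  also have "\<dots> = N ** G ** P' ** W" by (simp add: matrix_mul_assoc)
  also have "\<dots> = W" using NGP PW by simp
  finally show ?thesis .
qed

lemma wrule: "A ** B = C \<Longrightarrow> W ** A ** B = W ** C"
  by (simp add: matrix_mul_assoc[symmetric])

lemma wrule3: "A ** B ** D = C \<Longrightarrow> W ** A ** B ** D = W ** C"
  by (simp add: matrix_mul_assoc[symmetric])

lemma part2_core:
  fixes X X' :: "complex^'k::finite^'k" and F F' :: "complex^'l::finite^'k" and G G' :: "complex^'k^'l"
  assumes sp: "spec X r zeta kk Pr" and sp': "spec X' r zeta kk Pr'"
    and M: "\<And>i. i < r \<Longrightarrow> Pr i ** F ** Ms i = Pr i"
    and M': "\<And>i. i < r \<Longrightarrow> Pr' i ** F' ** Ms' i = Pr' i"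
    and N: "\<And>i. i < r \<Longrightarrow> Ns i ** G ** Pr i = Pr i"
    and N': "\<And>i. i < r \<Longrightarrow> Ns' i ** G' ** Pr' i = Pr' i"
    and R: "\<And>i. i < r \<Longrightarrow> G' ** Pr' i ** F' = G ** Pr i ** F"
  defines "h \<equiv> (\<Sum>j<r. Pr' j ** F' ** Ms j ** Pr j)"
  defines "h' \<equiv> (\<Sum>j<r. Pr j ** F ** Ms' j ** Pr' j)"
  shows "G' ** h = G" "h' ** h = mat 1" "h ** F = F'" "X' ** h = h ** X"
proof -
  have PP: "\<And>i. i < r \<Longrightarrow> Pr i ** Pr i = Pr i" using spec_idem[OF sp] .
  have PP': "\<And>i. i < r \<Longrightarrow> Pr' i ** Pr' i = Pr' i" using spec_idem[OF sp'] .
  have hP: "h ** Pr i = Pr' i ** F' ** Ms i ** Pr i" if i: "i < r" for i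
  proof -
    have "h = (\<Sum>j<r. (Pr' j ** F' ** Ms j) ** Pr j)" unfolding h_def ..
    then show ?thesis using sum_proj_r[OF sp i, of "\<lambda>j. Pr' j ** F' ** Ms j"] by simp
  qed
  have h'P: "h' ** Pr' i = Pr i ** F ** Ms' i ** Pr' i" if i: "i < r" for i
  proof -
    have "h' = (\<Sum>j<r. (Pr j ** F ** Ms' j) ** Pr' j)" unfolding h'_def ..
    then show ?thesis using sum_proj_r[OF sp' i, of "\<lambda>j. Pr j ** F ** Ms' j"] by simp
  qed
  have Ph: "Pr' i ** h = Pr' i ** F' ** Ms i ** Pr i" if i: "i < r" for i
  proof -
    have "h = (\<Sum>j<r. Pr' j ** (F' ** Ms j ** Pr j))" unfolding h_def by (simp add: matrix_mul_assoc)
    then have "Pr' i ** h = Pr' i ** (F' ** Ms i ** Pr i)" using sum_proj_l[OF sp' i, of "\<lambda>j. F' ** Ms j ** Pr j"] by simp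
    then show ?thesis by (simp add: matrix_mul_assoc)
  qed
  show "G' ** h = G"
  proof (rule eq_by_proj_r[OF sp])
    fix i assume i: "i < r"
    have "G' ** h ** Pr i = G' ** (h ** Pr i)" by (simp add: matrix_mul_assoc)
    also have "\<dots> = G' ** Pr' i ** F' ** Ms i ** Pr i" unfolding hP[OF i] by (simp add: matrix_mul_assoc)
    also have "\<dots> = G ** Pr i ** F ** Ms i ** Pr i" using R[OF i] by simp
    also have "\<dots> = G ** Pr i ** Pr i" using wrule3[OF M[OF i], of G] by simp
    also have "\<dots> = G ** Pr i" using wrule[OF PP[OF i], of G] by simp
    finally show "G' ** h ** Pr i = G ** Pr i" .
  qed
  show "h' ** h = mat 1"
  proof (rule eq_by_proj_r[OF sp])
    fix i assume i: "i < r"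
    let ?Z = "Pr i ** F ** Ms' i ** Pr' i ** F' ** Ms i ** Pr i"
    have "h' ** h ** Pr i = h' ** (h ** Pr i)" by (simp add: matrix_mul_assoc)
    also have "\<dots> = h' ** Pr' i ** F' ** Ms i ** Pr i" unfolding hP[OF i] by (simp add: matrix_mul_assoc)
    also have "\<dots> = ?Z" using h'P[OF i] by simp
    also have "?Z = Pr i"
    proof (rule inj_cancel[OF N[OF i] PP[OF i]])
      show "Pr i ** ?Z = ?Z" using PP[OF i] by (simp add: matrix_mul_assoc)
      show "Pr i ** Pr i = Pr i" using PP[OF i] .
      have "G ** Pr i ** ?Z = G ** Pr i ** F ** Ms' i ** Pr' i ** F' ** Ms i ** Pr i"
        using wrule[OF PP[OF i], of G] by (simp add: matrix_mul_assoc)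
      also have "\<dots> = G' ** Pr' i ** F' ** Ms' i ** Pr' i ** F' ** Ms i ** Pr i"
        using R[OF i] by simp
      also have "\<dots> = G' ** Pr' i ** Pr' i ** F' ** Ms i ** Pr i"
        using wrule3[OF M'[OF i], of G'] by simp
      also have "\<dots> = G' ** Pr' i ** F' ** Ms i ** Pr i"
        using wrule[OF PP'[OF i], of G'] by simp
      also have "\<dots> = G ** Pr i ** F ** Ms i ** Pr i" using R[OF i] by simp
      also have "\<dots> = G ** Pr i ** Pr i" using wrule3[OF M[OF i], of G] by simp
      finally show "G ** Pr i ** ?Z = G ** Pr i ** Pr i" .
    qed
    finally show "h' ** h ** Pr i = mat 1 ** Pr i" by simp
  qed
  show "h ** F = F'"
  proof (rule eq_by_proj_l[OF sp'])
    fix i assume i: "i < r"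
    let ?Z = "Pr' i ** F' ** Ms i ** Pr i ** F"
    have "Pr' i ** (h ** F) = Pr' i ** h ** F" by (simp add: matrix_mul_assoc)
    also have "\<dots> = ?Z" using Ph[OF i] by simp
    also have "?Z = Pr' i ** F'"
    proof (rule inj_cancel[OF N'[OF i] PP'[OF i]])
      show "Pr' i ** ?Z = ?Z" using PP'[OF i] by (simp add: matrix_mul_assoc)
      show "Pr' i ** (Pr' i ** F') = Pr' i ** F'" using PP'[OF i] by (simp add: matrix_mul_assoc)
      have "G' ** Pr' i ** ?Z = G' ** Pr' i ** F' ** Ms i ** Pr i ** F"
        using wrule[OF PP'[OF i], of G'] by (simp add: matrix_mul_assoc)
      also have "\<dots> = G ** Pr i ** F ** Ms i ** Pr i ** F" using R[OF i] by simp
      also have "\<dots> = G ** Pr i ** Pr i ** F" using wrule3[OF M[OF i], of G] by simp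
      also have "\<dots> = G ** Pr i ** F" using wrule[OF PP[OF i], of G] by simp
      also have "\<dots> = G' ** Pr' i ** F'" using R[OF i] by simp
      also have "\<dots> = G' ** Pr' i ** (Pr' i ** F')"
        using wrule[OF PP'[OF i], of G'] by (simp add: matrix_mul_assoc)
      finally show "G' ** Pr' i ** ?Z = G' ** Pr' i ** (Pr' i ** F')" .
    qed
    finally show "Pr' i ** (h ** F) = Pr' i ** F'" .
  qed
  show "X' ** h = h ** X"
  proof (rule eq_by_proj_r[OF sp])
    fix i assume i: "i < r"
    have "X' ** h ** Pr i = X' ** (Pr' i ** F' ** Ms i ** Pr i)"
      using wrule[OF hP[OF i], of X'] by (simp add: matrix_mul_assoc)
    also have "\<dots> = X' ** Pr' i ** F' ** Ms i ** Pr i" by (simp add: matrix_mul_assoc)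
    also have "\<dots> = mat (zeta i) ** (Pr' i ** F' ** Ms i ** Pr i)"
      using spec_facts(4)[OF sp' i] by (simp add: matrix_mul_assoc)
    also have "\<dots> = mat (zeta i) ** (h ** Pr i)" using hP[OF i] by simp
    also have "\<dots> = h ** (mat (zeta i) ** Pr i)" by (rule mat_comm2[symmetric])
    also have "\<dots> = h ** X ** Pr i" using spec_facts(4)[OF sp i] by (simp add: matrix_mul_assoc[symmetric])
    finally show "X' ** h ** Pr i = h ** X ** Pr i" .
  qed
qed

(* ---- B3 ---- *)
lemma left_inv_on:
  fixes P :: "complex^'k::finite^'k" and G :: "complex^'k^'l::finite"
  assumes idem: "P ** P = P" and inj: "\<And>x. P *v x = x \<Longrightarrow> G *v x = 0 \<Longrightarrow> x = 0"
  shows "\<exists>N. N ** G ** P = P"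
proof -
  let ?V = "range ((*v) P)"
  have injG: "\<And>x. x \<in> ?V \<Longrightarrow> G *v x = 0 \<Longrightarrow> x = 0" using inj idem_range[OF idem] by blast
  have sub2: "range ((*v) (transpose P ** transpose G)) \<subseteq> range ((*v) (transpose P))"
    by (auto simp: matrix_vector_mul_assoc[symmetric])
  have "vec.dim (range ((*v) (transpose P ** transpose G))) = rank (G ** P)"
    using rank_transpose_gen[of "G ** P"] rank_eq_dim_range[of "transpose P ** transpose G"] by (simp add: matrix_transpose_mul)
  also have "\<dots> = vec.dim ((*v) G ` ?V)" by (simp add: rank_eq_dim_range range_mult)
  also have "\<dots> = vec.dim ?V" using dim_inj_image[OF range_subspace[of P] injG] by simp
  also have "\<dots> = vec.dim (range ((*v) (transpose P)))" using rank_transpose_gen[of P] rank_eq_dim_range[of "transpose P"] rank_eq_dim_range[of P] by simp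
  finally have "range ((*v) (transpose P ** transpose G)) = range ((*v) (transpose P))"
    using range_eq_dim[OF sub2] by simp
  then obtain N' where "transpose P ** transpose G ** N' = transpose P"
    using right_inv[of "transpose P" "transpose P ** transpose G"] by auto
  then have "transpose (transpose P ** transpose G ** N') = P" by simp
  moreover have "transpose (transpose P ** transpose G ** N') = transpose N' ** G ** P"
    by (simp add: matrix_transpose_mul matrix_mul_assoc)
  ultimately show ?thesis by auto
qed

lemma gl_orbit_mem: "invertible g \<Longrightarrow> gl_act g q \<in> gl_orbit q"
  unfolding gl_orbit_def by blast

lemma M0_intro:
  fixes X :: "complex^'k::finite^'k" and F :: "complex^'l::finite^'k" and G :: "complex^'k^'l"
  assumes sp: "spec X r zeta kk Pr"
    and M: "\<And>i. i < r \<Longrightarrow> Pr i ** F ** Ms i = Pr i"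
    and N: "\<And>i. i < r \<Longrightarrow> Ns i ** G ** Pr i = Pr i"
  shows "(X, Y, F, G) \<in> M0"
proof -
  let ?q = "(X, Y, F, G)"
  have free: "g = mat 1" if g: "invertible g" and st: "gl_act g ?q = ?q" for g
  proof -
    have e: "g ** X ** matrix_inv g = X" "g ** F = F" using st unfolding gl_act_simp by auto
    have "g ** X = g ** X ** matrix_inv g ** g" by (simp add: matrix_mul_assoc[symmetric] minv_l[OF g])
    then have gX: "g ** X = X ** g" using e(1) by simp
    show ?thesis
    proof (rule eq_by_proj_r[OF sp])
      fix i assume i: "i < r"
      have "g ** Pr i = g ** Pr i ** F ** Ms i" using wrule3[OF M[OF i], of g] by simp
      also have "\<dots> = Pr i ** (g ** F) ** Ms i" using spec_comm[OF sp i gX] by (simp add: matrix_mul_assoc)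
      also have "\<dots> = Pr i" using M[OF i] e(2) by simp
      finally show "g ** Pr i = mat 1 ** Pr i" by simp
    qed
  qed
  have closed: "closed (gl_orbit ?q)"
    unfolding closed_sequential_limits
  proof (intro allI impI, elim conjE)
    fix x l assume mem: "\<forall>n. x n \<in> gl_orbit ?q" and lim: "x \<longlonglongrightarrow> l"
    have "\<forall>n. \<exists>g. invertible g \<and> x n = gl_act g ?q" using mem unfolding gl_orbit_def by blast
    then obtain g where g: "\<And>n. invertible (g n)" and xg: "\<And>n. x n = gl_act (g n) ?q" by metis
    obtain X' Y' F' G' where l: "l = (X', Y', F', G')" by (cases l) auto
    have xn: "x n = (g n ** X ** matrix_inv (g n), Y, g n ** F, G ** matrix_inv (g n))" for n
      using xg[of n] by (simp add: gl_act_simp)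
    have limX: "(\<lambda>n. g n ** X ** matrix_inv (g n)) \<longlonglongrightarrow> X'"
      using tendsto_fst[OF lim] unfolding xn l by simp
    have limF: "(\<lambda>n. g n ** F) \<longlonglongrightarrow> F'"
      using tendsto_fst[OF tendsto_snd[OF tendsto_snd[OF lim]]] unfolding xn l by simp
    have limG: "(\<lambda>n. G ** matrix_inv (g n)) \<longlonglongrightarrow> G'"
      using tendsto_snd[OF tendsto_snd[OF tendsto_snd[OF lim]]] unfolding xn l by simp
    have limY: "(\<lambda>n. Y) \<longlonglongrightarrow> Y'"
      using tendsto_fst[OF tendsto_snd[OF lim]] unfolding xn l by simp
    then have YY: "Y' = Y" using LIMSEQ_unique[OF limY tendsto_const] by simp
    have Lg: "lagr r zeta i (g n ** X ** matrix_inv (g n)) = g n ** Pr i ** matrix_inv (g n)" if i: "i < r" for i n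
      using lagr_conj[OF g, where X=X and r=r and zeta=zeta and i=i] lagr_eq[OF sp i] by simp
    have gsum: "g n = (\<Sum>i<r. lagr r zeta i (g n ** X ** matrix_inv (g n)) ** (g n ** F) ** Ms i)" for n
    proof -
      have "(\<Sum>i<r. lagr r zeta i (g n ** X ** matrix_inv (g n)) ** (g n ** F) ** Ms i) = (\<Sum>i<r. g n ** Pr i)"
      proof (rule sum.cong[OF refl])
        fix i assume "i \<in> {..<r}"
        then have i: "i < r" by simp
        have "lagr r zeta i (g n ** X ** matrix_inv (g n)) ** (g n ** F) ** Ms i
            = g n ** Pr i ** (matrix_inv (g n) ** g n) ** F ** Ms i"
          unfolding Lg[OF i] by (simp add: matrix_mul_assoc)
        also have "\<dots> = g n ** (Pr i ** F ** Ms i)" by (simp add: minv_l[OF g] matrix_mul_assoc)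
        finally show "lagr r zeta i (g n ** X ** matrix_inv (g n)) ** (g n ** F) ** Ms i = g n ** Pr i"
          using M[OF i] by simp
      qed
      also have "\<dots> = g n" unfolding matrix_sum_ldistrib[symmetric] spec_facts(2)[OF sp] by simp
      finally show ?thesis by simp
    qed
    have hsum: "matrix_inv (g n) = (\<Sum>i<r. Ns i ** (G ** matrix_inv (g n)) ** lagr r zeta i (g n ** X ** matrix_inv (g n)))" for n
    proof -
      have "(\<Sum>i<r. Ns i ** (G ** matrix_inv (g n)) ** lagr r zeta i (g n ** X ** matrix_inv (g n))) = (\<Sum>i<r. Pr i ** matrix_inv (g n))"
      proof (rule sum.cong[OF refl])
        fix i assume "i \<in> {..<r}"
        then have i: "i < r" by simp
        have "Ns i ** (G ** matrix_inv (g n)) ** lagr r zeta i (g n ** X ** matrix_inv (g n))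
            = Ns i ** G ** (matrix_inv (g n) ** g n) ** Pr i ** matrix_inv (g n)"
          unfolding Lg[OF i] by (simp add: matrix_mul_assoc)
        also have "\<dots> = (Ns i ** G ** Pr i) ** matrix_inv (g n)" by (simp add: minv_l[OF g] matrix_mul_assoc)
        finally show "Ns i ** (G ** matrix_inv (g n)) ** lagr r zeta i (g n ** X ** matrix_inv (g n)) = Pr i ** matrix_inv (g n)"
          using N[OF i] by simp
      qed
      also have "\<dots> = matrix_inv (g n)" unfolding matrix_sum_rdistrib[symmetric] spec_facts(2)[OF sp] by simp
      finally show ?thesis by simp
    qed
    define gh where "gh = (\<Sum>i<r. lagr r zeta i X' ** F' ** Ms i)"
    define hh where "hh = (\<Sum>i<r. Ns i ** G' ** lagr r zeta i X')"
    have limg: "g \<longlonglongrightarrow> gh"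
    proof -
      have "(\<lambda>n. \<Sum>i<r. lagr r zeta i (g n ** X ** matrix_inv (g n)) ** (g n ** F) ** Ms i) \<longlonglongrightarrow> gh"
        unfolding gh_def
        by (rule tendsto_sum, rule tendsto_mmult[OF tendsto_mmult[OF tendsto_lagr[OF limX] limF] tendsto_const])
      moreover have "(\<lambda>n. \<Sum>i<r. lagr r zeta i (g n ** X ** matrix_inv (g n)) ** (g n ** F) ** Ms i) = g"
        by (rule ext, rule gsum[symmetric])
      ultimately show ?thesis by simp
    qed
    have limh: "(\<lambda>n. matrix_inv (g n)) \<longlonglongrightarrow> hh"
    proof -
      have "(\<lambda>n. \<Sum>i<r. Ns i ** (G ** matrix_inv (g n)) ** lagr r zeta i (g n ** X ** matrix_inv (g n))) \<longlonglongrightarrow> hh"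
        unfolding hh_def
        by (rule tendsto_sum, rule tendsto_mmult[OF tendsto_mmult[OF tendsto_const limG] tendsto_lagr[OF limX]])
      moreover have "(\<lambda>n. \<Sum>i<r. Ns i ** (G ** matrix_inv (g n)) ** lagr r zeta i (g n ** X ** matrix_inv (g n))) = (\<lambda>n. matrix_inv (g n))"
        by (rule ext, rule hsum[symmetric])
      ultimately show ?thesis by simp
    qed
    have "(\<lambda>n. g n ** matrix_inv (g n)) \<longlonglongrightarrow> gh ** hh" by (rule tendsto_mmult[OF limg limh])
    moreover have "(\<lambda>n. g n ** matrix_inv (g n)) = (\<lambda>n. mat 1)" using minv_r[OF g] by simp
    ultimately have "(\<lambda>n. mat 1) \<longlonglongrightarrow> gh ** hh" by simp
    then have "mat 1 = gh ** hh" by (rule LIMSEQ_unique[OF tendsto_const])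
    then have "gh ** hh = mat 1" by simp
    then have ginv: "invertible gh" "matrix_inv gh = hh" using minv_unique by auto
    have "x \<longlonglongrightarrow> (gh ** X ** hh, Y, gh ** F, G ** hh)"
      unfolding xn
      by (rule tendsto_Pair[OF tendsto_mmult[OF tendsto_mmult[OF limg tendsto_const] limh]
            tendsto_Pair[OF tendsto_const tendsto_Pair[OF tendsto_mmult[OF limg tendsto_const] tendsto_mmult[OF tendsto_const limh]]]])
    then have "l = gl_act gh ?q" using LIMSEQ_unique[OF lim] unfolding gl_act_simp ginv(2) by simp
    then show "l \<in> gl_orbit ?q" using gl_orbit_mem[OF ginv(1)] by simp
  qed
  show ?thesis unfolding M0_def using free closed by blast
qed

(* ---- B4 ---- *)
lemma part1:
  fixes X :: "complex^'k::finite^'k" and F :: "complex^'l::finite^'k" and G :: "complex^'k^'l"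
  assumes ss: "semisimple_class P r zeta kk" and M: "(X, Y, F, G) \<in> M0" and XP: "X \<in> P"
  shows "transfer_map r zeta (X, Y, F, G) \<in> rat_maps_R r zeta kk"
proof -
  obtain Pr where sp: "spec X r zeta kk Pr" using spec_exists[OF ss XP] by blast
  have eq: "transfer_map r zeta (X, Y, F, G) = (\<lambda>z. if z \<in> zeta ` {..<r} then 0
           else Y + (\<Sum>i<r. mat (inverse (z - zeta i)) ** (G ** Pr i ** F)))"
  proof
    fix z
    show "transfer_map r zeta (X, Y, F, G) z = (if z \<in> zeta ` {..<r} then 0
           else Y + (\<Sum>i<r. mat (inverse (z - zeta i)) ** (G ** Pr i ** F)))"
    proof (cases "z \<in> zeta ` {..<r}")
      case True
      then show ?thesis unfolding transfer_map_def by simp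
    next
      case False
      then show ?thesis using spec_transfer[OF sp False] by simp
    qed
  qed
  have rk: "\<forall>i<r. rank (G ** Pr i ** F) = kk i" using part1_ranges(2)[OF sp M] by blast
  show ?thesis unfolding rat_maps_R_def eq
    apply (rule CollectI)
    apply (rule exI[of _ Y])
    apply (rule exI[of _ "\<lambda>i. G ** Pr i ** F"])
    using rk by simp
qed

lemma part2_bwd:
  fixes X :: "complex^'k::finite^'k" and F :: "complex^'l::finite^'k" and G :: "complex^'k^'l"
  assumes ss: "semisimple_class P r zeta kk" and XP: "X \<in> P" and h: "invertible h"
  shows "transfer_map r zeta (gl_act h (X, Y, F, G)) = transfer_map r zeta (X, Y, F, G)"
proof
  fix z
  obtain Pr where sp: "spec X r zeta kk Pr" using spec_exists[OF ss XP] by blast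
  show "transfer_map r zeta (gl_act h (X, Y, F, G)) z = transfer_map r zeta (X, Y, F, G) z"
  proof (cases "z \<in> zeta ` {..<r}")
    case True
    then show ?thesis unfolding transfer_map_def gl_act_simp by simp
  next
    case False
    let ?A = "mat z - X"
    let ?Ai = "matrix_inv (mat z - X)"
    have AAi: "?A ** ?Ai = mat 1" using minv_r[OF spec_inv(1)[OF sp False]] .
    have e1: "mat z - h ** X ** matrix_inv h = h ** ?A ** matrix_inv h"
      using mat_conj[OF h, of z] by (simp add: matrix_diff_ldistrib matrix_diff_rdistrib)
    have "(h ** ?A ** matrix_inv h) ** (h ** ?Ai ** matrix_inv h) = h ** (?A ** ?Ai) ** matrix_inv h"
      by (rule conj_mult[OF minv_l[OF h]])
    also have "\<dots> = mat 1" using AAi minv_r[OF h] by simp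
    finally have e2: "matrix_inv (h ** ?A ** matrix_inv h) = h ** ?Ai ** matrix_inv h"
      by (rule minv_unique(2))
    have e3: "matrix_inv (mat z - h ** X ** matrix_inv h) = h ** ?Ai ** matrix_inv h"
      using e1 e2 by simp
    have "G ** matrix_inv h ** (h ** ?Ai ** matrix_inv h) ** (h ** F) = G ** (matrix_inv h ** h) ** ?Ai ** (matrix_inv h ** h) ** F"
      by (simp add: matrix_mul_assoc)
    also have "\<dots> = G ** ?Ai ** F" using minv_l[OF h] by simp
    finally have chain: "G ** matrix_inv h ** (h ** ?Ai ** matrix_inv h) ** (h ** F) = G ** ?Ai ** F" .
    show ?thesis using False by (simp add: transfer_map_def gl_act_simp e3 chain)
  qed
qed

lemma choose_fun:
  assumes "\<And>i. i < r \<Longrightarrow> \<exists>M. P i M"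
  shows "\<exists>f. \<forall>i<r. P i (f i)"
proof -
  have "\<forall>i\<in>{..<r}. \<exists>M. P i M" using assms by auto
  then obtain f where "\<forall>i\<in>{..<r}. P i (f i)" using bchoice by metis
  then show ?thesis by auto
qed

lemma part2_fwd:
  fixes X X' :: "complex^'k::finite^'k" and F F' :: "complex^'l::finite^'k" and G G' :: "complex^'k^'l"
  assumes ss: "semisimple_class P r zeta kk"
    and M: "(X, Y, F, G) \<in> M0" and XP: "X \<in> P"
    and M': "(X', Y', F', G') \<in> M0" and XP': "X' \<in> P"
    and T: "transfer_map r zeta (X, Y, F, G) = transfer_map r zeta (X', Y', F', G')"
  shows "(X', Y', F', G') \<in> gl_orbit (X, Y, F, G)"
proof -
  obtain Pr where sp: "spec X r zeta kk Pr" using spec_exists[OF ss XP] by blast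
  obtain Pr' where sp': "spec X' r zeta kk Pr'" using spec_exists[OF ss XP'] by blast
  obtain Ms where Ms: "\<forall>i<r. Pr i ** F ** Ms i = Pr i"
    using choose_fun[of r "\<lambda>i M. Pr i ** F ** M = Pr i"] part1_ranges(3)[OF sp M] by blast
  obtain Ns where Ns: "\<forall>i<r. Ns i ** G ** Pr i = Pr i"
    using choose_fun[of r "\<lambda>i N. N ** G ** Pr i = Pr i"] part1_ranges(4)[OF sp M] by blast
  obtain Ms' where Ms': "\<forall>i<r. Pr' i ** F' ** Ms' i = Pr' i"
    using choose_fun[of r "\<lambda>i M. Pr' i ** F' ** M = Pr' i"] part1_ranges(3)[OF sp' M'] by blast
  obtain Ns' where Ns': "\<forall>i<r. Ns' i ** G' ** Pr' i = Pr' i"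
    using choose_fun[of r "\<lambda>i N. N ** G' ** Pr' i = Pr' i"] part1_ranges(4)[OF sp' M'] by blast
  have inj: "inj_on zeta {..<r}" using spec_facts(1)[OF sp] .
  have hz: "Y + (\<Sum>i<r. mat (inverse (z - zeta i)) ** (G ** Pr i ** F)) = Y' + (\<Sum>i<r. mat (inverse (z - zeta i)) ** (G' ** Pr' i ** F'))"
    if z: "z \<notin> zeta ` {..<r}" for z
    using spec_transfer[OF sp z, of Y F G] spec_transfer[OF sp' z, of Y' F' G'] T by metis
  note pf = pf_matrix[OF inj hz]
  have R: "\<And>i. i < r \<Longrightarrow> G' ** Pr' i ** F' = G ** Pr i ** F" using pf(2) by simp
  define h where "h = (\<Sum>j<r. Pr' j ** F' ** Ms j ** Pr j)"
  define h' where "h' = (\<Sum>j<r. Pr j ** F ** Ms' j ** Pr' j)"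
  note c1 = part2_core[OF sp sp', of F Ms F' Ms' Ns G Ns' G', folded h_def h'_def]
  note c2 = part2_core[OF sp' sp, of F' Ms' F Ms Ns' G' Ns G, folded h_def h'_def]
  have c1': "G' ** h = G" "h' ** h = mat 1" "h ** F = F'" "X' ** h = h ** X"
    using c1 Ms Ms' Ns Ns' R by auto
  have hh': "h ** h' = mat 1" using c2 Ms Ms' Ns Ns' R by auto
  have hi: "invertible h" "matrix_inv h = h'" using minv_unique[OF hh'] by auto
  have "gl_act h (X, Y, F, G) = (h ** X ** h', Y, h ** F, G ** h')"
    unfolding gl_act_simp hi(2) ..
  also have "h ** X ** h' = X'"
  proof -
    have "h ** X ** h' = X' ** h ** h'" using c1'(4) by simp
    also have "\<dots> = X'" using hh' by (simp add: matrix_mul_assoc[symmetric])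
    finally show ?thesis .
  qed
  also have "G ** h' = G'"
  proof -
    have "G ** h' = G' ** h ** h'" using c1'(1) by simp
    also have "\<dots> = G'" using hh' by (simp add: matrix_mul_assoc[symmetric])
    finally show ?thesis .
  qed
  finally have "gl_act h (X, Y, F, G) = (X', Y', F', G')" using c1'(3) pf(1) by simp
  then show ?thesis using gl_orbit_mem[OF hi(1)] by metis
qed

(* ---- B5 ---- *)
lemma factor_lemma:
  fixes R :: "complex^'l::finite^'l" and P :: "complex^'k::finite^'k"
  assumes d: "rank R = vec.dim (range ((*v) P))"
  shows "\<exists>Psi Phi. range ((*v) (Psi ** R)) = range ((*v) P) \<and> Phi ** Psi ** R = R
          \<and> (\<forall>v \<in> range ((*v) P). (Phi :: complex^'k^'l) *v v = 0 \<longrightarrow> v = 0)"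
proof -
  let ?W = "range ((*v) R)" and ?V = "range ((*v) P)"
  have dWV: "vec.dim ?W = vec.dim ?V" using d rank_eq_dim_range[of R] by simp
  obtain B where B: "B \<subseteq> ?W" "vec.independent B" "?W \<subseteq> vec.span B" "card B = vec.dim ?W"
    using vec.basis_exists by blast
  obtain C where C: "C \<subseteq> ?V" "vec.independent C" "?V \<subseteq> vec.span C" "card C = vec.dim ?V"
    using vec.basis_exists by blast
  obtain f :: "complex^'l \<Rightarrow> complex^'k" where f: "Vector_Spaces.linear (*s) (*s) f" "f ` B = C" "f ` ?W = ?V" "inj_on f ?W"
    using vec.basis_to_basis_subspace_isomorphism[OF range_subspace range_subspace dWV B C] by blast
  obtain g :: "complex^'k \<Rightarrow> complex^'l" where g: "Vector_Spaces.linear (*s) (*s) g" "\<forall>v\<in>?W. g (f v) = v"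
    using vec.linear_exists_left_inverse_on[OF f(1) range_subspace f(4)] by blast
  define Psi where "Psi = matrix f"
  define Phi where "Phi = matrix g"
  have Pf: "Psi *v x = f x" for x unfolding Psi_def by (rule matrix_works[OF f(1)])
  have Pg: "Phi *v x = g x" for x unfolding Phi_def by (rule matrix_works[OF g(1)])
  have r1: "range ((*v) (Psi ** R)) = ?V"
    unfolding range_mult using f(3) by (simp add: Pf image_image)
  have r2: "Phi ** Psi ** R = R"
  proof (subst matrix_eq, intro allI)
    fix x
    have "Phi ** Psi ** R *v x = g (f (R *v x))" by (simp add: matrix_vector_mul_assoc[symmetric] Pf Pg)
    also have "\<dots> = R *v x" using g(2) by blast
    finally show "Phi ** Psi ** R *v x = R *v x" .
  qed
  have r3: "\<forall>v \<in> ?V. Phi *v v = 0 \<longrightarrow> v = 0"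
  proof (intro ballI impI)
    fix v assume v: "v \<in> ?V" and z: "Phi *v v = 0"
    then obtain w where w: "w \<in> ?W" "v = f w" using f(3) by blast
    then have "w = 0" using z g(2) Pg by simp
    then show "v = 0" using w vec.linear_0[OF f(1)] by simp
  qed
  show ?thesis using r1 r2 r3 by blast
qed

lemma range_in_idem:
  fixes P :: "complex^'k::finite^'k" and A :: "complex^'m::finite^'k"
  assumes idem: "P ** P = P" and sub: "range ((*v) A) \<subseteq> range ((*v) P)"
  shows "P ** A = A"
proof (subst matrix_eq, intro allI)
  fix x
  have "A *v x \<in> range ((*v) P)" using sub by blast
  then have "P *v (A *v x) = A *v x" using idem_range[OF idem] by blast
  then show "P ** A *v x = A *v x" by (simp add: matrix_vector_mul_assoc)
qed

lemma part3:
  fixes P :: "(complex^'k::finite^'k) set"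
  assumes ss: "semisimple_class P r zeta kk" and RR: "RF \<in> rat_maps_R r zeta kk"
  shows "\<exists>q::('k, 'l::finite) quad. q \<in> M0 \<and> fst q \<in> P \<and> transfer_map r zeta q = RF"
proof -
  obtain Y :: "complex^'l^'l" and Rs where RF: "RF = (\<lambda>z. if z \<in> zeta ` {..<r} then 0
           else Y + (\<Sum>i<r. mat (inverse (z - zeta i)) ** Rs i))" and rk: "\<forall>i<r. rank (Rs i) = kk i"
    using RR unfolding rat_maps_R_def by blast
  obtain X0 :: "complex^'k^'k" where Peq: "P = {g ** X0 ** matrix_inv g | g :: complex^'k^'k. invertible g}"
    using ss unfolding semisimple_class_def by blast
  have X0P: "X0 \<in> P" unfolding Peq
    by (rule CollectI, rule exI[of _ "mat 1"]) (simp add: minv_one)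
  obtain Pr where sp: "spec X0 r zeta kk Pr" using spec_exists[OF ss X0P] by blast
  define Q where "Q i PP \<longleftrightarrow> range ((*v) (fst PP ** Rs i)) = range ((*v) (Pr i)) \<and> snd PP ** fst PP ** Rs i = Rs i
          \<and> (\<forall>v \<in> range ((*v) (Pr i)). (snd PP :: complex^'k^'l) *v v = 0 \<longrightarrow> v = 0)" for i PP
  have H: "\<exists>PP. Q i PP" if i: "i < r" for i
  proof -
    have "rank (Rs i) = vec.dim (range ((*v) (Pr i)))" using rk spec_facts(6)[OF sp i] i by simp
    from factor_lemma[OF this] obtain Psi Phi where
      "range ((*v) (Psi ** Rs i)) = range ((*v) (Pr i)) \<and> Phi ** Psi ** Rs i = Rs i
          \<and> (\<forall>v \<in> range ((*v) (Pr i)). (Phi :: complex^'k^'l) *v v = 0 \<longrightarrow> v = 0)" by blast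
    then have "Q i (Psi, Phi)" unfolding Q_def by simp
    then show ?thesis ..
  qed
  obtain PP where PP0: "\<forall>i<r. Q i (PP i)" using choose_fun[of r Q, OF H] by blast
  have PP: "\<forall>i<r. range ((*v) (fst (PP i) ** Rs i)) = range ((*v) (Pr i)) \<and> snd (PP i) ** fst (PP i) ** Rs i = Rs i
          \<and> (\<forall>v \<in> range ((*v) (Pr i)). (snd (PP i) :: complex^'k^'l) *v v = 0 \<longrightarrow> v = 0)"
    using PP0 unfolding Q_def by blast
  define Psi where "Psi i = fst (PP i)" for i
  define Phi where "Phi i = snd (PP i)" for i
  have Ps1: "\<And>i. i < r \<Longrightarrow> range ((*v) (Psi i ** Rs i)) = range ((*v) (Pr i))"
    and Ps2: "\<And>i. i < r \<Longrightarrow> Phi i ** Psi i ** Rs i = Rs i"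
    and Ps3: "\<And>i v. i < r \<Longrightarrow> Pr i *v v = v \<Longrightarrow> Phi i *v v = 0 \<Longrightarrow> v = 0"
  proof -
    fix i v assume i: "i < r"
    show "range ((*v) (Psi i ** Rs i)) = range ((*v) (Pr i))" using PP i unfolding Psi_def by blast
    show "Phi i ** Psi i ** Rs i = Rs i" using PP i unfolding Psi_def Phi_def by blast
    assume "Pr i *v v = v" "Phi i *v v = 0"
    then have "v \<in> range ((*v) (Pr i))" by (metis rangeI)
    then show "v = 0" using PP i \<open>Phi i *v v = 0\<close> unfolding Phi_def by blast
  qed
  define F where "F = (\<Sum>j<r. Psi j ** Rs j)"
  define G where "G = (\<Sum>j<r. Phi j ** Pr j)"
  have PA: "Pr j ** (Psi j ** Rs j) = Psi j ** Rs j" if j: "j < r" for j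
    using range_in_idem[OF spec_idem[OF sp j], of "Psi j ** Rs j"] Ps1[OF j] by simp
  have PF: "Pr i ** F = Psi i ** Rs i" if i: "i < r" for i
  proof -
    have "F = (\<Sum>j<r. Pr j ** (Psi j ** Rs j))" unfolding F_def using PA by simp
    then show ?thesis using sum_proj_l[OF sp i, of "\<lambda>j. Psi j ** Rs j"] PA[OF i] by simp
  qed
  have GP: "G ** Pr i = Phi i ** Pr i" if i: "i < r" for i
    unfolding G_def by (rule sum_proj_r[OF sp i])
  have GPF: "G ** Pr i ** F = Rs i" if i: "i < r" for i
  proof -
    have "G ** Pr i ** F = Phi i ** (Pr i ** F)" using GP[OF i] by (simp add: matrix_mul_assoc)
    also have "\<dots> = Rs i" using PF[OF i] Ps2[OF i] by (simp add: matrix_mul_assoc)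
    finally show ?thesis .
  qed
  have "\<And>i. i < r \<Longrightarrow> \<exists>M. Pr i ** F ** M = Pr i"
  proof -
    fix i assume i: "i < r"
    have "range ((*v) (Pr i ** F)) = range ((*v) (Pr i))" using PF[OF i] Ps1[OF i] by simp
    then show "\<exists>M. Pr i ** F ** M = Pr i" by (intro right_inv) simp
  qed
  then obtain Ms where Ms: "\<forall>i<r. Pr i ** F ** Ms i = Pr i" using choose_fun[of r "\<lambda>i M. Pr i ** F ** M = Pr i"] by blast
  have "\<And>i. i < r \<Longrightarrow> \<exists>N. N ** G ** Pr i = Pr i"
  proof -
    fix i assume i: "i < r"
    show "\<exists>N. N ** G ** Pr i = Pr i"
    proof (rule left_inv_on[OF spec_idem[OF sp i]])
      fix v assume v: "Pr i *v v = v" and Gv: "G *v v = 0"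
      have "Phi i *v v = (Phi i ** Pr i) *v v" using v by (simp add: matrix_vector_mul_assoc[symmetric])
      also have "\<dots> = (G ** Pr i) *v v" using GP[OF i] by simp
      also have "\<dots> = 0" using v Gv by (simp add: matrix_vector_mul_assoc[symmetric])
      finally show "v = 0" using Ps3[OF i v] by simp
    qed
  qed
  then obtain Ns where Ns: "\<forall>i<r. Ns i ** G ** Pr i = Pr i" using choose_fun[of r "\<lambda>i N. N ** G ** Pr i = Pr i"] by blast
  have M0: "(X0, Y, F, G) \<in> M0" using M0_intro[OF sp, of F Ms Ns G Y] Ms Ns by simp
  have T: "transfer_map r zeta (X0, Y, F, G) = RF"
  proof
    fix z
    show "transfer_map r zeta (X0, Y, F, G) z = RF z"
    proof (cases "z \<in> zeta ` {..<r}")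
      case True
      then show ?thesis unfolding transfer_map_def RF by simp
    next
      case False
      have "(\<Sum>i<r. mat (inverse (z - zeta i)) ** (G ** Pr i ** F)) = (\<Sum>i<r. mat (inverse (z - zeta i)) ** Rs i)"
        using GPF by simp
      then show ?thesis using spec_transfer[OF sp False, of Y F G] False unfolding RF by simp
    qed
  qed
  show ?thesis using M0 X0P T by (intro exI[of _ "(X0, Y, F, G)"]) simp
qed

theorem lemma4p3:
  fixes P :: "(complex^'k::finite^'k) set"
    and r :: nat and zeta :: "nat \<Rightarrow> complex" and kk :: "nat \<Rightarrow> nat"
  assumes "semisimple_class P r zeta kk"
  defines "S \<equiv> {q :: ('k, 'l::finite) quad. q \<in> M0 \<and> fst q \<in> P}"
  shows "(\<forall>q\<in>S. transfer_map r zeta q \<in> rat_maps_R r zeta kk)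
    \<and> (\<forall>q\<in>S. \<forall>q'\<in>S. transfer_map r zeta q = transfer_map r zeta q' \<longleftrightarrow> q' \<in> gl_orbit q)
    \<and> (\<forall>R\<in>rat_maps_R r zeta kk. \<exists>q\<in>S. transfer_map r zeta q = R)"
proof (intro conjI)
  note ss = assms(1)
  show "\<forall>q\<in>S. transfer_map r zeta q \<in> rat_maps_R r zeta kk"
  proof
    fix q assume qS: "q \<in> S"
    obtain X Y F G where q: "q = (X, Y, F, G)" by (cases q) auto
    show "transfer_map r zeta q \<in> rat_maps_R r zeta kk"
      using part1[OF ss, of X Y F G] qS unfolding S_def q by simp
  qed
  show "\<forall>q\<in>S. \<forall>q'\<in>S. transfer_map r zeta q = transfer_map r zeta q' \<longleftrightarrow> q' \<in> gl_orbit q"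
  proof (intro ballI iffI)
    fix q q' assume qS: "q \<in> S" and q'S: "q' \<in> S"
    obtain X Y F G where q: "q = (X, Y, F, G)" by (cases q) auto
    obtain X' Y' F' G' where q': "q' = (X', Y', F', G')" by (cases q') auto
    {
      assume "transfer_map r zeta q = transfer_map r zeta q'"
      then show "q' \<in> gl_orbit q"
        using part2_fwd[OF ss, of X Y F G X' Y' F' G'] qS q'S unfolding S_def q q' by simp
    }
    {
      assume "q' \<in> gl_orbit q"
      then obtain h where h: "invertible h" "q' = gl_act h q" unfolding gl_orbit_def by blast
      have "X \<in> P" using qS unfolding S_def q by simp
      then show "transfer_map r zeta q = transfer_map r zeta q'"
        using part2_bwd[OF ss _ h(1), of X Y F G] h(2) unfolding q by simp
    }
  qed
  show "\<forall>R\<in>rat_maps_R r zeta kk. \<exists>q\<in>S. transfer_map r zeta q = R"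
  proof
    fix R :: "complex \<Rightarrow> complex^'l^'l" assume "R \<in> rat_maps_R r zeta kk"
    from part3[OF ss this] obtain q :: "('k, 'l) quad" where "q \<in> M0" "fst q \<in> P" "transfer_map r zeta q = R"
      by blast
    then show "\<exists>q\<in>S. transfer_map r zeta q = R" unfolding S_def by blast
  qed
qed

end
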